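(* In the setting of the context, for each integer $r\ge r_0$ there are elements $g_0\in F_{xz}$ and $g_1\in F_{yz}$ such that: (1) $s_2^{-1}g_0s_2=g_1$; (2) $r/D\le|g_0|_{R_{xz}}\le r$ and $r/D\le|g_1|_{R_{yz}}\le r$; (3) there is a path $\gamma$ in the Cayley graph $\Gamma(G_1,S_1)$ connecting $g_0$ and $g_1$ of length at most $Df(r)$, each vertex of which is of the form $g_0h$ with $h\in H$; in particular $\gamma$ avoids the open ball of radius $r/D$ about $e$.
   Context: $H$ is a finitely presented group with finite generating set $T$, containing a free subgroup $F$ of rank $p$ with free basis $R=\{d_1,\dots,d_p\}\subset T$. $F_x,F_y,F_z$ are free of rank $p$ with bases $R_x=\{x_i\},R_y=\{y_i\},R_z=\{z_i\}$. $G_1=[H\ast_{\langle d_i=x_iy_i^{-1}\rangle}(F_x\times F_y\times F_z)]\times\langle s_1\rangle$; $a_i=x_iz_i$, $b_i=y_iz_i$, $R_{xz}=\{a_i\}$, $R_{yz}=\{b_i\}$, $F_{xz}=\langle R_{xz}\rangle$, $F_{yz}=\langle R_{yz}\rangle$; $G_2=\langle G_1,s_2\mid s_2^{-1}a_is_2=b_i,\ 1\le i\le p\rangle$; $S_1=T\cup R_x\cup R_y\cup R_z\cup R_{xz}\cup R_{yz}\cup\{s_1\}$. $f=\Delta^{-1}$ where $\Delta$ is a non-decreasing bijection of $[0,\infty)$ Lipschitz equivalent to $\mathrm{Dist}_F^H$ (with $\mathrm{Dist}_F^H(n)=\max\{|g|_R:g\in F,|g|_T\le n\}$), $\Delta(r)\ge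 r$ for $r\ge1$, $f(|g|_R)\le|g|_T$ for $g\in F$; and $D>1$, $r_0\ge1$ are constants such that for each $r\ge r_0$ there is an element $u\in F$ which is palindromic with respect to $R$ (its reduced word in $R$ reads the same in both directions) with $r/D\le|u|_R\le r$ and $|u|_T\le Df(r)$. (Such $\Delta,D,r_0$ exist when $\mathrm{Dist}_F^H$ admits an exponentially bounded sequence of palindromic certificates in $F$, the standing assumption.) *)

theory Defs
  imports Complex_Main "HOL-Algebra.Algebra"
begin

text \<open>A letter is a pair (x, b): b = True means x, b = False means x inverse.\<close>

definition words :: "'g set \<Rightarrow> ('g \<times> bool) list set" where
  "words Gn = {w. set (map fst w) \<subseteq> Gn}"

inductive_set peq :: "'g set \<Rightarrow> ('g \<times> bool) list set \<Rightarrow> (('g \<times> bool) list \<times> ('g \<times> bool) list) set"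
  for Gn Rel where
  refl: "w \<in> words Gn \<Longrightarrow> (w, w) \<in> peq Gn Rel"
| sym: "(u, v) \<in> peq Gn Rel \<Longrightarrow> (v, u) \<in> peq Gn Rel"
| trans: "(u, v) \<in> peq Gn Rel \<Longrightarrow> (v, w) \<in> peq Gn Rel \<Longrightarrow> (u, w) \<in> peq Gn Rel"
| cancel: "u \<in> words Gn \<Longrightarrow> v \<in> words Gn \<Longrightarrow> x \<in> Gn \<Longrightarrow>
     (u @ [(x, b), (x, \<not> b)] @ v, u @ v) \<in> peq Gn Rel"
| rel: "u \<in> words Gn \<Longrightarrow> v \<in> words Gn \<Longrightarrow> r \<in> Rel \<Longrightarrow> r \<in> words Gn \<Longrightarrow>
     (u @ r @ v, u @ v) \<in> peq Gn Rel"

definition pres :: "'g set \<Rightarrow> ('g \<times> bool) list set \<Rightarrow> ('g \<times> bool) list set monoid" where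
  "pres Gn Rel = \<lparr> carrier = words Gn // peq Gn Rel,
     monoid.mult = (\<lambda>A B. \<Union>a\<in>A. \<Union>b\<in>B. peq Gn Rel `` {a @ b}),
     one = peq Gn Rel `` {[]} \<rparr>"

definition gen_el :: "'g set \<Rightarrow> ('g \<times> bool) list set \<Rightarrow> 'g \<Rightarrow> ('g \<times> bool) list set" where
  "gen_el Gn Rel x = peq Gn Rel `` {[(x, True)]}"

definition finitely_presented :: "('a, 'b) monoid_scheme \<Rightarrow> bool" where
  "finitely_presented G \<longleftrightarrow> group G \<and>
     (\<exists>(n::nat) Rel. finite Rel \<and> Rel \<subseteq> words {..<n} \<and> pres {..<n} Rel \<cong> G)"

definition word_length :: "('a, 'b) monoid_scheme \<Rightarrow> 'a set \<Rightarrow> 'a \<Rightarrow> nat" where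
  "word_length G S g = (LEAST n. \<exists>l. length l = n \<and> set l \<subseteq> S \<union> m_inv G ` S \<and>
       foldr (\<otimes>\<^bsub>G\<^esub>) l \<one>\<^bsub>G\<^esub> = g)"

definition eval_word :: "('a, 'b) monoid_scheme \<Rightarrow> ('a \<times> bool) list \<Rightarrow> 'a" where
  "eval_word G w = foldr (\<lambda>(x, b) acc. (if b then x else inv\<^bsub>G\<^esub> x) \<otimes>\<^bsub>G\<^esub> acc) w \<one>\<^bsub>G\<^esub>"

definition reduced :: "('a \<times> bool) list \<Rightarrow> bool" where
  "reduced w \<longleftrightarrow> (\<forall>i. Suc i < length w \<longrightarrow>
      \<not> (fst (w ! i) = fst (w ! Suc i) \<and> snd (w ! i) \<noteq> snd (w ! Suc i)))"

definition free_basis :: "('a, 'b) monoid_scheme \<Rightarrow> 'a set \<Rightarrow> bool" where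
  "free_basis G B \<longleftrightarrow> B \<subseteq> carrier G \<and>
     (\<forall>w. w \<noteq> [] \<and> reduced w \<and> set (map fst w) \<subseteq> B \<longrightarrow> eval_word G w \<noteq> \<one>\<^bsub>G\<^esub>)"

definition palindromic :: "('a, 'b) monoid_scheme \<Rightarrow> 'a set \<Rightarrow> 'a \<Rightarrow> bool" where
  "palindromic G R u \<longleftrightarrow> (\<exists>w. reduced w \<and> set (map fst w) \<subseteq> R \<and> eval_word G w = u \<and> rev w = w)"

definition dist_fn :: "('a, 'b) monoid_scheme \<Rightarrow> 'a set \<Rightarrow> 'a set \<Rightarrow> nat \<Rightarrow> nat" where
  "dist_fn G R T n = Max {word_length G R g | g. g \<in> generate G R \<and> word_length G T g \<le> n}"

definition lip_equiv :: "(real \<Rightarrow> real) \<Rightarrow> (nat \<Rightarrow> nat) \<Rightarrow> bool" where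
  "lip_equiv \<Delta> \<phi> \<longleftrightarrow> (\<exists>C\<ge>1. \<forall>n::nat.
      \<Delta> (real n / C) / C \<le> real (\<phi> n) \<and> real (\<phi> n) \<le> C * \<Delta> (C * real n))"

text \<open>vs is a path in the Cayley graph of G w.r.t. S from g to h, of length (length vs - 1).\<close>
definition cayley_path :: "('a, 'b) monoid_scheme \<Rightarrow> 'a set \<Rightarrow> 'a list \<Rightarrow> 'a \<Rightarrow> 'a \<Rightarrow> bool" where
  "cayley_path G S vs g h \<longleftrightarrow> vs \<noteq> [] \<and> hd vs = g \<and> last vs = h \<and> set vs \<subseteq> carrier G \<and>
     (\<forall>k. Suc k < length vs \<longrightarrow>
        (\<exists>s\<in>S. vs ! Suc k = vs ! k \<otimes>\<^bsub>G\<^esub> s \<or> vs ! k = vs ! Suc k \<otimes>\<^bsub>G\<^esub> s))"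

datatype 'h gen = GH 'h | GX nat | GY nat | GZ nat | GS1 | GS2

abbreviation pos :: "'g \<Rightarrow> 'g \<times> bool" where "pos x \<equiv> (x, True)"
abbreviation neg :: "'g \<Rightarrow> 'g \<times> bool" where "neg x \<equiv> (x, False)"

definition comm_rel :: "'g \<Rightarrow> 'g \<Rightarrow> ('g \<times> bool) list" where
  "comm_rel u v = [neg u, neg v, pos u, pos v]"

definition gens1 :: "('h, 'b) monoid_scheme \<Rightarrow> nat \<Rightarrow> 'h gen set" where
  "gens1 H p = GH ` carrier H \<union> GX ` {1..p} \<union> GY ` {1..p} \<union> GZ ` {1..p} \<union> {GS1}"

definition gens2 :: "('h, 'b) monoid_scheme \<Rightarrow> nat \<Rightarrow> 'h gen set" where
  "gens2 H p = gens1 H p \<union> {GS2}"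

text \<open>Relators of G1 = [H *_{d_i = x_i y_i^-1} (F_x \<times> F_y \<times> F_z)] \<times> <s1>:
  multiplication table of H, commutation of the factors F_x, F_y, F_z,
  amalgamation d_i = x_i y_i^-1, and centrality of s1.\<close>
definition rels1 :: "('h, 'b) monoid_scheme \<Rightarrow> nat \<Rightarrow> (nat \<Rightarrow> 'h) \<Rightarrow> ('h gen \<times> bool) list set" where
  "rels1 H p d =
     {[pos (GH a), pos (GH b), neg (GH (a \<otimes>\<^bsub>H\<^esub> b))] | a b. a \<in> carrier H \<and> b \<in> carrier H}
   \<union> {comm_rel (GX i) (GY j) | i j. i \<in> {1..p} \<and> j \<in> {1..p}}
   \<union> {comm_rel (GX i) (GZ j) | i j. i \<in> {1..p} \<and> j \<in> {1..p}}
   \<union> {comm_rel (GY i) (GZ j) | i j. i \<in> {1..p} \<and> j \<in> {1..p}}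
   \<union> {[pos (GH (d i)), pos (GY i), neg (GX i)] | i. i \<in> {1..p}}
   \<union> {comm_rel GS1 v | v. v \<in> gens1 H p - {GS1}}"

text \<open>Relators of G2: those of G1 plus s2^-1 a_i s2 = b_i, i.e. s2^-1 x_i z_i s2 z_i^-1 y_i^-1.\<close>
definition rels2 :: "('h, 'b) monoid_scheme \<Rightarrow> nat \<Rightarrow> (nat \<Rightarrow> 'h) \<Rightarrow> ('h gen \<times> bool) list set" where
  "rels2 H p d = rels1 H p d \<union>
     {[neg GS2, pos (GX i), pos (GZ i), pos GS2, neg (GZ i), neg (GY i)] | i. i \<in> {1..p}}"

definition G1 :: "('h, 'b) monoid_scheme \<Rightarrow> nat \<Rightarrow> (nat \<Rightarrow> 'h) \<Rightarrow> ('h gen \<times> bool) list set monoid" where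
  "G1 H p d = pres (gens1 H p) (rels1 H p d)"

definition G2 :: "('h, 'b) monoid_scheme \<Rightarrow> nat \<Rightarrow> (nat \<Rightarrow> 'h) \<Rightarrow> ('h gen \<times> bool) list set monoid" where
  "G2 H p d = pres (gens2 H p) (rels2 H p d)"

definition el1 :: "('h, 'b) monoid_scheme \<Rightarrow> nat \<Rightarrow> (nat \<Rightarrow> 'h) \<Rightarrow> 'h gen \<Rightarrow> ('h gen \<times> bool) list set" where
  "el1 H p d x = gen_el (gens1 H p) (rels1 H p d) x"

definition a_el :: "('h, 'b) monoid_scheme \<Rightarrow> nat \<Rightarrow> (nat \<Rightarrow> 'h) \<Rightarrow> nat \<Rightarrow> ('h gen \<times> bool) list set" where
  "a_el H p d i = el1 H p d (GX i) \<otimes>\<^bsub>G1 H p d\<^esub> el1 H p d (GZ i)"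

definition b_el :: "('h, 'b) monoid_scheme \<Rightarrow> nat \<Rightarrow> (nat \<Rightarrow> 'h) \<Rightarrow> nat \<Rightarrow> ('h gen \<times> bool) list set" where
  "b_el H p d i = el1 H p d (GY i) \<otimes>\<^bsub>G1 H p d\<^esub> el1 H p d (GZ i)"

definition S1 :: "('h, 'b) monoid_scheme \<Rightarrow> nat \<Rightarrow> (nat \<Rightarrow> 'h) \<Rightarrow> 'h set \<Rightarrow> ('h gen \<times> bool) list set set" where
  "S1 H p d T = (\<lambda>t. el1 H p d (GH t)) ` T \<union> (\<lambda>i. el1 H p d (GX i)) ` {1..p}
     \<union> (\<lambda>i. el1 H p d (GY i)) ` {1..p} \<union> (\<lambda>i. el1 H p d (GZ i)) ` {1..p}
     \<union> a_el H p d ` {1..p} \<union> b_el H p d ` {1..p} \<union> {el1 H p d GS1}"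

definition to_G2 :: "('h, 'b) monoid_scheme \<Rightarrow> nat \<Rightarrow> (nat \<Rightarrow> 'h) \<Rightarrow> ('h gen \<times> bool) list set \<Rightarrow> ('h gen \<times> bool) list set" where
  "to_G2 H p d A = peq (gens2 H p) (rels2 H p d) `` A"

definition s2_el :: "('h, 'b) monoid_scheme \<Rightarrow> nat \<Rightarrow> (nat \<Rightarrow> 'h) \<Rightarrow> ('h gen \<times> bool) list set" where
  "s2_el H p d = gen_el (gens2 H p) (rels2 H p d) GS2"

end

theory Submission
  imports Defs
begin


section \<open>Generic facts on presentations\<close>

definition flip :: "'g \<times> bool \<Rightarrow> 'g \<times> bool" where "flip c = (fst c, \<not> snd c)"
definition invw :: "('g \<times> bool) list \<Rightarrow> ('g \<times> bool) list" where
  "invw w = rev (map flip w)"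

lemma flip_flip[simp]: "flip (flip c) = c" by (simp add: flip_def)
lemma invw_invw[simp]: "invw (invw w) = w" by (simp add: invw_def rev_map comp_def)
lemma invw_Nil[simp]: "invw [] = []" by (simp add: invw_def)
lemma invw_Cons[simp]: "invw (c # w) = invw w @ [flip c]" by (simp add: invw_def)
lemma invw_append[simp]: "invw (u @ v) = invw v @ invw u" by (simp add: invw_def)
lemma length_invw[simp]: "length (invw w) = length w" by (simp add: invw_def)

lemma words_Nil[simp]: "[] \<in> words Gn" by (simp add: words_def)
lemma words_Cons[simp]: "(c # w \<in> words Gn) \<longleftrightarrow> fst c \<in> Gn \<and> w \<in> words Gn"
  by (auto simp: words_def)
lemma words_append[simp]: "(u @ v \<in> words Gn) \<longleftrightarrow> u \<in> words Gn \<and> v \<in> words Gn"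
  by (auto simp: words_def)
lemma set_fst_invw[simp]: "fst ` set (invw w) = fst ` set w"
  by (force simp: invw_def flip_def image_iff)
lemma words_invw[simp]: "invw w \<in> words Gn \<longleftrightarrow> w \<in> words Gn"
  by (simp add: words_def)

lemma peq_words: "(u, v) \<in> peq Gn Rel \<Longrightarrow> u \<in> words Gn \<and> v \<in> words Gn"
  by (induction rule: peq.induct) auto

lemma peq_refl'[intro]: "w \<in> words Gn \<Longrightarrow> (w, w) \<in> peq Gn Rel" by (rule peq.refl)

lemma equiv_peq: "equiv (words Gn) (peq Gn Rel)"
  unfolding equiv_def refl_on_def sym_def trans_def
proof (intro conjI allI impI ballI subsetI)
  fix z assume "z \<in> peq Gn Rel" then show "z \<in> words Gn \<times> words Gn"
    using peq_words by (cases z) auto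
qed (auto intro: peq.intros)

lemma peq_append_left: "(u, v) \<in> peq Gn Rel \<Longrightarrow> w \<in> words Gn \<Longrightarrow> (w @ u, w @ v) \<in> peq Gn Rel"
proof (induction rule: peq.induct)
  case (cancel u v x b)
  then show ?case using peq.cancel[of "w @ u" Gn v x b Rel] by simp
next
  case (rel u v r)
  then show ?case using peq.rel[of "w @ u" Gn v r Rel] by simp
qed (auto intro: peq.intros)

lemma peq_append_right: "(u, v) \<in> peq Gn Rel \<Longrightarrow> w \<in> words Gn \<Longrightarrow> (u @ w, v @ w) \<in> peq Gn Rel"
proof (induction rule: peq.induct)
  case (cancel u v x b)
  then show ?case using peq.cancel[of u Gn "v @ w" x b Rel] by simp
next
  case (rel u v r)
  then show ?case using peq.rel[of u Gn "v @ w" r Rel] by simp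
qed (auto intro: peq.intros)

lemma peq_append: "(a, a') \<in> peq Gn Rel \<Longrightarrow> (b, b') \<in> peq Gn Rel \<Longrightarrow> (a @ b, a' @ b') \<in> peq Gn Rel"
proof -
  assume 1: "(a, a') \<in> peq Gn Rel" and 2: "(b, b') \<in> peq Gn Rel"
  have "(a @ b, a' @ b) \<in> peq Gn Rel" using peq_append_right[OF 1] peq_words[OF 2] by blast
  moreover have "(a' @ b, a' @ b') \<in> peq Gn Rel" using peq_append_left[OF 2] peq_words[OF 1] by blast
  ultimately show ?thesis by (rule peq.trans)
qed

lemma class_eqD: "peq Gn Rel `` {a} = peq Gn Rel `` {b} \<Longrightarrow> b \<in> words Gn \<Longrightarrow> (a, b) \<in> peq Gn Rel"
  by (rule eq_equiv_class[OF _ equiv_peq])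

lemma class_eqI: "(a, b) \<in> peq Gn Rel \<Longrightarrow> peq Gn Rel `` {a} = peq Gn Rel `` {b}"
  by (rule equiv_class_eq[OF equiv_peq])

lemma pres_carrier: "carrier (pres Gn Rel) = words Gn // peq Gn Rel"
  by (simp add: pres_def)

lemma pres_carrier_iff: "A \<in> carrier (pres Gn Rel) \<longleftrightarrow> (\<exists>a\<in>words Gn. A = peq Gn Rel `` {a})"
  by (auto simp: pres_def quotient_def)

lemma class_in_carrier[intro]: "a \<in> words Gn \<Longrightarrow> peq Gn Rel `` {a} \<in> carrier (pres Gn Rel)"
  by (auto simp: pres_carrier_iff)

lemma pres_one: "\<one>\<^bsub>pres Gn Rel\<^esub> = peq Gn Rel `` {[]}" by (simp add: pres_def)

lemma pres_mult_class:
  assumes "a \<in> words Gn" "b \<in> words Gn"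
  shows "peq Gn Rel `` {a} \<otimes>\<^bsub>pres Gn Rel\<^esub> peq Gn Rel `` {b} = peq Gn Rel `` {a @ b}"
proof -
  have eq: "\<And>a' b'. a' \<in> peq Gn Rel `` {a} \<Longrightarrow> b' \<in> peq Gn Rel `` {b} \<Longrightarrow>
      peq Gn Rel `` {a' @ b'} = peq Gn Rel `` {a @ b}"
    by (rule class_eqI) (auto intro: peq_append peq.sym)
  have m: "a \<in> peq Gn Rel `` {a}" "b \<in> peq Gn Rel `` {b}" using assms by auto
  have "(\<Union>a'\<in>peq Gn Rel `` {a}. \<Union>b'\<in>peq Gn Rel `` {b}. peq Gn Rel `` {a' @ b'}) = peq Gn Rel `` {a @ b}"
  proof (intro equalityI subsetI)
    fix x assume "x \<in> (\<Union>a'\<in>peq Gn Rel `` {a}. \<Union>b'\<in>peq Gn Rel `` {b}. peq Gn Rel `` {a' @ b'})"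
    then obtain a' b' where "a' \<in> peq Gn Rel `` {a}" "b' \<in> peq Gn Rel `` {b}" "x \<in> peq Gn Rel `` {a' @ b'}"
      by blast
    then show "x \<in> peq Gn Rel `` {a @ b}" using eq by metis
  next
    fix x assume "x \<in> peq Gn Rel `` {a @ b}"
    then show "x \<in> (\<Union>a'\<in>peq Gn Rel `` {a}. \<Union>b'\<in>peq Gn Rel `` {b}. peq Gn Rel `` {a' @ b'})"
      using m by blast
  qed
  then show ?thesis unfolding pres_def by simp
qed

lemma peq_invw_cancel: "a \<in> words Gn \<Longrightarrow> (invw a @ a, []) \<in> peq Gn Rel"
proof (induction a)
  case Nil then show ?case by auto
next
  case (Cons c a)
  obtain x b where c: "c = (x, b)" by (cases c)
  have "(invw a @ [(x, \<not> b), (x, \<not>\<not> b)] @ a, invw a @ a) \<in> peq Gn Rel"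
    using Cons by (intro peq.cancel) (auto simp: c)
  then show ?case using Cons by (auto simp: c flip_def intro: peq.trans)
qed

lemma group_pres: "group (pres Gn Rel)"
proof (rule groupI)
  fix x y assume "x \<in> carrier (pres Gn Rel)" "y \<in> carrier (pres Gn Rel)"
  then show "x \<otimes>\<^bsub>pres Gn Rel\<^esub> y \<in> carrier (pres Gn Rel)"
    by (auto simp: pres_carrier_iff pres_mult_class)
next
  show "\<one>\<^bsub>pres Gn Rel\<^esub> \<in> carrier (pres Gn Rel)" by (auto simp: pres_one)
next
  fix x y z assume "x \<in> carrier (pres Gn Rel)" "y \<in> carrier (pres Gn Rel)" "z \<in> carrier (pres Gn Rel)"
  then show "x \<otimes>\<^bsub>pres Gn Rel\<^esub> y \<otimes>\<^bsub>pres Gn Rel\<^esub> z = x \<otimes>\<^bsub>pres Gn Rel\<^esub> (y \<otimes>\<^bsub>pres Gn Rel\<^esub> z)"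
    by (auto simp: pres_carrier_iff pres_mult_class)
next
  fix x assume "x \<in> carrier (pres Gn Rel)"
  then show "\<one>\<^bsub>pres Gn Rel\<^esub> \<otimes>\<^bsub>pres Gn Rel\<^esub> x = x"
    by (auto simp: pres_carrier_iff pres_mult_class pres_one)
next
  fix x assume "x \<in> carrier (pres Gn Rel)"
  then obtain a where a: "a \<in> words Gn" "x = peq Gn Rel `` {a}" by (auto simp: pres_carrier_iff)
  then have "peq Gn Rel `` {invw a} \<otimes>\<^bsub>pres Gn Rel\<^esub> x = \<one>\<^bsub>pres Gn Rel\<^esub>"
    using class_eqI[OF peq_invw_cancel[OF a(1)]] a by (simp add: pres_mult_class pres_one)
  moreover have "peq Gn Rel `` {invw a} \<in> carrier (pres Gn Rel)" using a(1) by (intro class_in_carrier) simp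
  ultimately show "\<exists>y\<in>carrier (pres Gn Rel). y \<otimes>\<^bsub>pres Gn Rel\<^esub> x = \<one>\<^bsub>pres Gn Rel\<^esub>"
    by (rule rev_bexI[rotated])
qed

lemma pres_inv_class:
  assumes "a \<in> words Gn"
  shows "inv\<^bsub>pres Gn Rel\<^esub> (peq Gn Rel `` {a}) = peq Gn Rel `` {invw a}"
proof (rule group.inv_equality[OF group_pres])
  show "peq Gn Rel `` {invw a} \<otimes>\<^bsub>pres Gn Rel\<^esub> peq Gn Rel `` {a} = \<one>\<^bsub>pres Gn Rel\<^esub>"
    using assms class_eqI[OF peq_invw_cancel[OF assms]] by (simp add: pres_mult_class pres_one)
qed (use assms in auto)

lemma gen_el_carrier[intro]: "x \<in> Gn \<Longrightarrow> gen_el Gn Rel x \<in> carrier (pres Gn Rel)"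
  by (auto simp: gen_el_def)

lemma class_eval:
  assumes "w \<in> words Gn"
  shows "peq Gn Rel `` {w} = eval_word (pres Gn Rel) (map (\<lambda>(x, b). (gen_el Gn Rel x, b)) w)"
  using assms
proof (induction w)
  case Nil then show ?case by (simp add: eval_word_def pres_one)
next
  case (Cons c w)
  obtain x b where c: "c = (x, b)" by (cases c)
  have e: "(if b then gen_el Gn Rel x else inv\<^bsub>pres Gn Rel\<^esub> gen_el Gn Rel x) = peq Gn Rel `` {[(x, b)]}"
    using Cons.prems by (auto simp: c gen_el_def pres_inv_class flip_def)
  have "peq Gn Rel `` {c # w} = peq Gn Rel `` {[(x,b)]} \<otimes>\<^bsub>pres Gn Rel\<^esub> peq Gn Rel `` {w}"
    using Cons.prems by (simp add: pres_mult_class c)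
  then show ?case using Cons e by (simp add: eval_word_def c)
qed

lemma relator_one:
  assumes "r \<in> Rel" "r \<in> words Gn"
  shows "eval_word (pres Gn Rel) (map (\<lambda>(x, b). (gen_el Gn Rel x, b)) r) = \<one>\<^bsub>pres Gn Rel\<^esub>"
proof -
  have "(r, []) \<in> peq Gn Rel" using peq.rel[of "[]" Gn "[]" r Rel] assms by simp
  then show ?thesis using assms class_eqI[of r "[]" Gn Rel] by (simp add: class_eval[symmetric] pres_one)
qed




section \<open>Free reduction\<close>

definition cn :: "'g \<times> bool \<Rightarrow> 'g \<times> bool \<Rightarrow> bool" where
  "cn a b \<longleftrightarrow> fst a = fst b \<and> snd a \<noteq> snd b"

lemma cn_iff_flip: "cn a b \<longleftrightarrow> b = flip a"
  by (cases a; cases b) (auto simp: cn_def flip_def)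

lemma reduced_Nil[simp]: "reduced []" by (simp add: reduced_def)

lemma reduced_Cons: "reduced (a # w) \<longleftrightarrow> reduced w \<and> (w = [] \<or> \<not> cn a (hd w))"
proof
  assume r: "reduced (a # w)"
  have "reduced w" unfolding reduced_def
  proof (intro allI impI)
    fix i assume "Suc i < length w"
    then show "\<not> (fst (w ! i) = fst (w ! Suc i) \<and> snd (w ! i) \<noteq> snd (w ! Suc i))"
      using r[unfolded reduced_def, rule_format, of "Suc i"] by simp
  qed
  moreover have "w = [] \<or> \<not> cn a (hd w)"
    using r[unfolded reduced_def, rule_format, of 0] by (cases w) (auto simp: cn_def)
  ultimately show "reduced w \<and> (w = [] \<or> \<not> cn a (hd w))" by simp
next
  assume r: "reduced w \<and> (w = [] \<or> \<not> cn a (hd w))"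
  show "reduced (a # w)" unfolding reduced_def
  proof (intro allI impI)
    fix i assume i: "Suc i < length (a # w)"
    show "\<not> (fst ((a # w) ! i) = fst ((a # w) ! Suc i) \<and> snd ((a # w) ! i) \<noteq> snd ((a # w) ! Suc i))"
    proof (cases i)
      case 0 then show ?thesis using r i by (cases w) (auto simp: cn_def)
    next
      case (Suc j) then show ?thesis using r i by (auto simp: reduced_def)
    qed
  qed
qed

lemma reduced_single[simp]: "reduced [a]" by (simp add: reduced_Cons)
lemma reduced_Cons_Cons: "reduced (a # b # w) \<longleftrightarrow> \<not> cn a b \<and> reduced (b # w)"
  by (auto simp: reduced_Cons)

lemma reduced_append: "reduced (xs @ ys) \<longleftrightarrow> reduced xs \<and> reduced ys \<and> (xs = [] \<or> ys = [] \<or> \<not> cn (last xs) (hd ys))"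
  by (induction xs) (auto simp: reduced_Cons)

lemma cn_flip: "cn (flip a) (flip b) \<longleftrightarrow> cn b a"
  by (auto simp: cn_def flip_def)

lemma reduced_rev_map_flip: "reduced (invw w) \<longleftrightarrow> reduced w"
proof (induction w)
  case (Cons a w) then show ?case
    by (cases w) (auto simp: reduced_append reduced_Cons cn_flip hd_rev last_rev invw_def)
qed simp

fun push :: "'g \<times> bool \<Rightarrow> ('g \<times> bool) list \<Rightarrow> ('g \<times> bool) list" where
  "push c [] = [c]"
| "push c (d # t) = (if cn c d then t else c # d # t)"

definition pushall :: "('g \<times> bool) list \<Rightarrow> ('g \<times> bool) list \<Rightarrow> ('g \<times> bool) list" where
  "pushall g t = foldr push g t"

definition red :: "('g \<times> bool) list \<Rightarrow> ('g \<times> bool) list" where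
  "red w = pushall w []"

lemma pushall_Nil[simp]: "pushall [] t = t" by (simp add: pushall_def)
lemma pushall_Cons[simp]: "pushall (c # g) t = push c (pushall g t)" by (simp add: pushall_def)
lemma pushall_append: "pushall (a @ b) t = pushall a (pushall b t)" by (simp add: pushall_def)
lemma red_append: "red (a @ b) = pushall a (red b)" by (simp add: red_def pushall_append)
lemma red_Nil[simp]: "red [] = []" by (simp add: red_def)
lemma red_Cons: "red (c # w) = push c (red w)" by (simp add: red_def)

lemma push_reduced: "reduced t \<Longrightarrow> reduced (push c t)"
  by (cases t) (auto simp: reduced_Cons)

lemma pushall_reduced: "reduced t \<Longrightarrow> reduced (pushall g t)"
  by (induction g) (auto intro: push_reduced)

lemma red_reduced: "reduced (red w)"
  by (simp add: red_def pushall_reduced)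

lemma reduced_red: "reduced w \<Longrightarrow> red w = w"
proof (induction w)
  case (Cons c w)
  then have "reduced w" by (simp add: reduced_Cons)
  with Cons show ?case by (cases w) (auto simp: red_Cons reduced_Cons)
qed simp

lemma push_push_flip: "reduced xs \<Longrightarrow> push c (push (flip c) xs) = xs"
proof (cases xs)
  case Nil then show ?thesis by (simp add: cn_iff_flip)
next
  case (Cons e xs')
  assume r: "reduced xs"
  show ?thesis
  proof (cases "e = c")
    case True
    then show ?thesis using r Cons by (cases xs') (auto simp: cn_iff_flip reduced_Cons)
  next
    case False
    have "\<not> cn (flip c) e" using False by (simp add: cn_iff_flip)
    then show ?thesis using Cons by (simp add: cn_iff_flip)
  qed
qed

lemma pushall_push: "reduced s \<Longrightarrow> reduced t \<Longrightarrow> pushall (push c s) t = push c (pushall s t)"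
proof (cases s)
  case (Cons e s')
  assume rs: "reduced s" and rt: "reduced t"
  show ?thesis
  proof (cases "cn c e")
    case True
    then have c: "c = flip e" by (simp add: cn_iff_flip)
    have "reduced (pushall s' t)" using rt by (rule pushall_reduced)
    from push_push_flip[OF this, of "flip e"] show ?thesis using Cons True by (simp add: c)
  qed (use Cons in simp)
qed simp

lemma pushall_red: "reduced t \<Longrightarrow> pushall g t = pushall (red g) t"
proof (induction g)
  case (Cons c g)
  then show ?case by (simp add: red_Cons pushall_push red_reduced)
qed (simp add: red_def)

lemma pushall_inv_cancel: "reduced t \<Longrightarrow> pushall (g @ invw g) t = t"
proof (induction g arbitrary: t)
  case (Cons c g)
  have "pushall ((c # g) @ invw (c # g)) t = push c (pushall (g @ invw g) (push (flip c) t))"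
    by (simp add: pushall_append)
  also have "\<dots> = push c (push (flip c) t)" using Cons by (simp add: push_reduced)
  also have "\<dots> = t" using Cons.prems by (rule push_push_flip)
  finally show ?case .
qed simp

lemma length_push: "length (push c t) \<le> Suc (length t)"
  by (cases t) auto

lemma length_pushall: "length (pushall g t) \<le> length g + length t"
proof (induction g)
  case (Cons c g) then show ?case using length_push[of c "pushall g t"] by simp
qed simp

lemma length_red: "length (red w) \<le> length w"
  using length_pushall[of w "[]"] by (simp add: red_def)

section \<open>Substitutions and invariance\<close>

definition sub :: "('g \<Rightarrow> ('e \<times> bool) list) \<Rightarrow> ('g \<times> bool) list \<Rightarrow> ('e \<times> bool) list" where
  "sub \<sigma> w = concat (map (\<lambda>(x, b). if b then \<sigma> x else invw (\<sigma> x)) w)"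

lemma sub_Nil[simp]: "sub \<sigma> [] = []" by (simp add: sub_def)
lemma sub_Cons[simp]: "sub \<sigma> ((x, b) # w) = (if b then \<sigma> x else invw (\<sigma> x)) @ sub \<sigma> w"
  by (simp add: sub_def)
lemma sub_append[simp]: "sub \<sigma> (u @ v) = sub \<sigma> u @ sub \<sigma> v" by (simp add: sub_def)
lemma sub_invw: "sub \<sigma> (invw w) = invw (sub \<sigma> w)"
  by (induction w) (auto simp: flip_def)

lemma peq_red_sub:
  assumes rel: "\<And>r. r \<in> Rel \<Longrightarrow> red (sub \<sigma> r) = []"
  shows "(u, v) \<in> peq Gn Rel \<Longrightarrow> red (sub \<sigma> u) = red (sub \<sigma> v)"
proof (induction rule: peq.induct)
  case (cancel u v x b)
  have "pushall (sub \<sigma> [(x, b), (x, \<not> b)]) (red (sub \<sigma> v)) = red (sub \<sigma> v)"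
  proof (cases b)
    case True then show ?thesis using pushall_inv_cancel[OF red_reduced[of "sub \<sigma> v"], where g="\<sigma> x"] by simp
  next
    case False then show ?thesis using pushall_inv_cancel[OF red_reduced[of "sub \<sigma> v"], where g="invw (\<sigma> x)"] by simp
  qed
  moreover have "red (sub \<sigma> (u @ [(x, b), (x, \<not> b)] @ v)) =
     pushall (sub \<sigma> u) (pushall (sub \<sigma> [(x, b), (x, \<not> b)]) (red (sub \<sigma> v)))"
    by (simp only: sub_append red_append pushall_append)
  ultimately show ?case by (simp only: sub_append red_append)
next
  case (rel u v r)
  have "pushall (sub \<sigma> r) (red (sub \<sigma> v)) = red (sub \<sigma> v)"
    using pushall_red[OF red_reduced, of "sub \<sigma> r"] assms[OF rel(3)] by simp
  moreover have "red (sub \<sigma> (u @ r @ v)) = pushall (sub \<sigma> u) (pushall (sub \<sigma> r) (red (sub \<sigma> v)))"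
    by (simp only: sub_append red_append pushall_append)
  ultimately show ?case by (simp only: sub_append red_append)
qed auto




section \<open>Evaluation of words in groups\<close>

definition mapw :: "('i \<Rightarrow> 'a) \<Rightarrow> ('i \<times> bool) list \<Rightarrow> ('a \<times> bool) list" where
  "mapw f v = map (\<lambda>(i, b). (f i, b)) v"

lemma mapw_Nil[simp]: "mapw f [] = []" by (simp add: mapw_def)
lemma mapw_Cons[simp]: "mapw f ((i, b) # v) = (f i, b) # mapw f v" by (simp add: mapw_def)
lemma mapw_append[simp]: "mapw f (u @ v) = mapw f u @ mapw f v" by (simp add: mapw_def)
lemma mapw_rev: "mapw f (rev v) = rev (mapw f v)" by (simp add: mapw_def rev_map)
lemma length_mapw[simp]: "length (mapw f v) = length v" by (simp add: mapw_def)

lemma ew_Nil[simp]: "eval_word G [] = \<one>\<^bsub>G\<^esub>" by (simp add: eval_word_def)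
lemma ew_Cons[simp]: "eval_word G ((x, b) # w) = (if b then x else inv\<^bsub>G\<^esub> x) \<otimes>\<^bsub>G\<^esub> eval_word G w"
  by (simp add: eval_word_def)

context group begin

lemma ew_closed: "\<forall>i\<in>fst ` set v. f i \<in> carrier G \<Longrightarrow> eval_word G (mapw f v) \<in> carrier G"
  by (induction v) auto

lemma ew_closed': "fst ` set w \<subseteq> carrier G \<Longrightarrow> eval_word G w \<in> carrier G"
  by (induction w) auto

lemma ew_append': "fst ` set u \<subseteq> carrier G \<Longrightarrow> fst ` set v \<subseteq> carrier G \<Longrightarrow>
    eval_word G (u @ v) = eval_word G u \<otimes> eval_word G v"
proof (induction u)
  case Nil then show ?case using ew_closed'[of v] by simp
next
  case (Cons c u)
  then show ?case using ew_closed'[of u] ew_closed'[of v] by (cases c) (auto simp: m_assoc)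
qed

lemma comm_inv: "x \<in> carrier G \<Longrightarrow> y \<in> carrier G \<Longrightarrow> x \<otimes> y = y \<otimes> x \<Longrightarrow> x \<otimes> inv y = inv y \<otimes> x"
proof -
  assume a: "x \<in> carrier G" "y \<in> carrier G" and e: "x \<otimes> y = y \<otimes> x"
  have "y \<otimes> (x \<otimes> inv y) = (y \<otimes> x) \<otimes> inv y" using a by (simp add: m_assoc)
  also have "\<dots> = (x \<otimes> y) \<otimes> inv y" by (simp only: e)
  also have "\<dots> = x" using a by (simp add: m_assoc)
  finally have "x = y \<otimes> (x \<otimes> inv y)" by simp
  then show ?thesis using inv_solve_left'[of "x \<otimes> inv y" y x] a by simp
qed

lemma comm_mult: "x \<in> carrier G \<Longrightarrow> y \<in> carrier G \<Longrightarrow> z \<in> carrier G \<Longrightarrow>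
   x \<otimes> y = y \<otimes> x \<Longrightarrow> x \<otimes> z = z \<otimes> x \<Longrightarrow> x \<otimes> (y \<otimes> z) = (y \<otimes> z) \<otimes> x"
proof -
  assume a: "x \<in> carrier G" "y \<in> carrier G" "z \<in> carrier G" and e1: "x \<otimes> y = y \<otimes> x" and e2: "x \<otimes> z = z \<otimes> x"
  have "x \<otimes> (y \<otimes> z) = (x \<otimes> y) \<otimes> z" using a by (simp add: m_assoc)
  also have "\<dots> = (y \<otimes> x) \<otimes> z" by (simp only: e1)
  also have "\<dots> = y \<otimes> (x \<otimes> z)" using a by (simp add: m_assoc)
  also have "\<dots> = y \<otimes> (z \<otimes> x)" by (simp only: e2)
  also have "\<dots> = (y \<otimes> z) \<otimes> x" using a by (simp add: m_assoc)
  finally show ?thesis .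
qed

lemma comm_ew:
  assumes "x \<in> carrier G" "\<forall>i\<in>fst ` set v. f i \<in> carrier G \<and> x \<otimes> f i = f i \<otimes> x"
  shows "x \<otimes> eval_word G (mapw f v) = eval_word G (mapw f v) \<otimes> x"
  using assms(2)
proof (induction v)
  case (Cons c v)
  obtain i b where c: "c = (i, b)" by (cases c)
  have fi: "f i \<in> carrier G" "x \<otimes> f i = f i \<otimes> x" using Cons.prems c by auto
  have r: "eval_word G (mapw f v) \<in> carrier G" using Cons.prems by (intro ew_closed) auto
  have e: "x \<otimes> eval_word G (mapw f v) = eval_word G (mapw f v) \<otimes> x" using Cons by auto
  show ?case
  proof (cases b)
    case True then show ?thesis using comm_mult[OF assms(1) fi(1) r fi(2) e] by (simp add: c)
  next
    case False then show ?thesis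
      using comm_mult[OF assms(1) inv_closed[OF fi(1)] r comm_inv[OF assms(1) fi] e] by (simp add: c)
  qed
qed (use assms(1) in simp)

lemma swap_mid: "a \<in> carrier G \<Longrightarrow> b \<in> carrier G \<Longrightarrow> c \<in> carrier G \<Longrightarrow> d \<in> carrier G \<Longrightarrow>
   b \<otimes> c = c \<otimes> b \<Longrightarrow> (a \<otimes> b) \<otimes> (c \<otimes> d) = (a \<otimes> c) \<otimes> (b \<otimes> d)"
proof -
  assume *: "a \<in> carrier G" "b \<in> carrier G" "c \<in> carrier G" "d \<in> carrier G" "b \<otimes> c = c \<otimes> b"
  have "(a \<otimes> b) \<otimes> (c \<otimes> d) = a \<otimes> ((b \<otimes> c) \<otimes> d)" using *(1-4) by (simp add: m_assoc)
  also have "\<dots> = a \<otimes> ((c \<otimes> b) \<otimes> d)" by (simp only: *(5))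
  also have "\<dots> = (a \<otimes> c) \<otimes> (b \<otimes> d)" using *(1-4) by (simp add: m_assoc)
  finally show ?thesis .
qed

lemma ew_prod:
  assumes "\<forall>i\<in>fst ` set v. f i \<in> carrier G \<and> g i \<in> carrier G"
    and "\<forall>i\<in>fst ` set v. \<forall>j\<in>fst ` set v. f i \<otimes> g j = g j \<otimes> f i"
  shows "eval_word G (mapw (\<lambda>i. f i \<otimes> g i) v) = eval_word G (mapw f v) \<otimes> eval_word G (mapw g v)"
  using assms
proof (induction v)
  case (Cons c v)
  obtain i b where c: "c = (i, b)" by (cases c)
  have fi: "f i \<in> carrier G" "g i \<in> carrier G" using Cons.prems c by auto
  have F: "eval_word G (mapw f v) \<in> carrier G" using Cons.prems by (intro ew_closed) auto
  have Gg: "eval_word G (mapw g v) \<in> carrier G" using Cons.prems by (intro ew_closed) auto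
  have IH: "eval_word G (mapw (\<lambda>i. f i \<otimes> g i) v) = eval_word G (mapw f v) \<otimes> eval_word G (mapw g v)"
    using Cons by auto
  have cF: "g i \<otimes> eval_word G (mapw f v) = eval_word G (mapw f v) \<otimes> g i"
    using Cons.prems c fi by (intro comm_ew) auto
  show ?case
  proof (cases b)
    case True then show ?thesis using swap_mid[OF fi F Gg cF] IH by (simp add: c)
  next
    case False
    have fg: "f i \<otimes> g i = g i \<otimes> f i" using Cons.prems c by auto
    have c1: "inv (f i \<otimes> g i) = inv (f i) \<otimes> inv (g i)"
      using fi fg by (metis inv_mult_group)
    have cF': "inv (g i) \<otimes> eval_word G (mapw f v) = eval_word G (mapw f v) \<otimes> inv (g i)"
      using comm_inv[OF F fi(2) cF[symmetric]] by simp
    show ?thesis using swap_mid[OF inv_closed[OF fi(1)] inv_closed[OF fi(2)] F Gg cF'] IH c1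
      by (simp add: c False)
  qed
qed simp

lemma ew_inv_rev:
  assumes "\<forall>i\<in>fst ` set v. f i \<in> carrier G"
  shows "eval_word G (mapw (\<lambda>i. inv (f i)) v) = inv (eval_word G (mapw f (rev v)))"
  using assms
proof (induction v)
  case (Cons c v)
  obtain i b where c: "c = (i, b)" by (cases c)
  have fi: "f i \<in> carrier G" using Cons.prems c by auto
  have R: "eval_word G (mapw f (rev v)) \<in> carrier G" using Cons.prems by (intro ew_closed) auto
  have "eval_word G (mapw f (rev (c # v))) = eval_word G (mapw f (rev v)) \<otimes> eval_word G [(f i, b)]"
    using Cons.prems c by (simp add: mapw_rev[symmetric] ew_append' del: ew_Cons)
       (intro ew_append', auto simp: mapw_def)
  then show ?case using Cons fi R c by (cases b) (auto simp: inv_mult_group)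
qed simp

lemma ew_conj:
  assumes s: "s \<in> carrier G" and "\<forall>i\<in>fst ` set v. f i \<in> carrier G \<and> inv s \<otimes> f i \<otimes> s = g i"
  shows "inv s \<otimes> eval_word G (mapw f v) \<otimes> s = eval_word G (mapw g v)"
  using assms(2)
proof (induction v)
  case Nil then show ?case using s by simp
next
  case (Cons c v)
  obtain i b where c: "c = (i, b)" by (cases c)
  have fi: "f i \<in> carrier G" "inv s \<otimes> f i \<otimes> s = g i" using Cons.prems c by auto
  have F: "eval_word G (mapw f v) \<in> carrier G" using Cons.prems by (intro ew_closed) auto
  have IH: "inv s \<otimes> eval_word G (mapw f v) \<otimes> s = eval_word G (mapw g v)" using Cons by auto
  have split: "\<And>a. a \<in> carrier G \<Longrightarrow> inv s \<otimes> (a \<otimes> eval_word G (mapw f v)) \<otimes> s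
      = (inv s \<otimes> a \<otimes> s) \<otimes> (inv s \<otimes> eval_word G (mapw f v) \<otimes> s)"
    using s F by (simp add: m_assoc) (simp add: m_assoc[symmetric])
  have inv_conj: "inv s \<otimes> inv (f i) \<otimes> s = inv (inv s \<otimes> f i \<otimes> s)"
    using s fi(1) by (simp add: inv_mult_group m_assoc)
  show ?case
  proof (cases b)
    case True then show ?thesis using split[OF fi(1)] IH fi by (simp add: c)
  next
    case False then show ?thesis using split[OF inv_closed[OF fi(1)]] IH fi inv_conj by (simp add: c)
  qed
qed

lemma ew_gen: "A \<subseteq> carrier G \<Longrightarrow> \<forall>i\<in>fst ` set v. f i \<in> A \<Longrightarrow> eval_word G (mapw f v) \<in> generate G A"
proof (induction v)
  case Nil then show ?case by (simp add: generate.one)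
next
  case (Cons c v)
  obtain i b where c: "c = (i, b)" by (cases c)
  have fi: "f i \<in> A" using Cons.prems c by auto
  have IH: "eval_word G (mapw f v) \<in> generate G A" using Cons by auto
  have "(if b then f i else inv (f i)) \<in> generate G A"
    using fi by (simp add: generate.incl generate.inv)
  from generate.eng[OF this IH] show ?case by (simp add: c)
qed

lemma ew_foldr: "eval_word G (mapw f v) = foldr (\<otimes>) (map (\<lambda>(i, b). if b then f i else inv (f i)) v) \<one>"
  by (induction v) auto

end

lemma ew_hom:
  assumes "h \<in> hom G K" "group G" "group K" "\<forall>i\<in>fst ` set v. f i \<in> carrier G"
  shows "h (eval_word G (mapw f v)) = eval_word K (mapw (\<lambda>i. h (f i)) v)"
  using assms(4)
proof (induction v)
  case Nil then show ?case using hom_one[OF assms(1-3)] by simp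
next
  case (Cons c v)
  obtain i b where c: "c = (i, b)" by (cases c)
  have fi: "f i \<in> carrier G" using Cons.prems c by auto
  have F: "eval_word G (mapw f v) \<in> carrier G" using Cons.prems by (intro group.ew_closed[OF assms(2)]) auto
  have hi: "h (inv\<^bsub>G\<^esub> (f i)) = inv\<^bsub>K\<^esub> (h (f i))"
    using group_hom.hom_inv[of G K h] assms fi by (simp add: group_hom_def group_hom_axioms_def)
  have IH: "h (eval_word G (mapw f v)) = eval_word K (mapw (\<lambda>i. h (f i)) v)" using Cons c by auto
  have e: "(if b then f i else inv\<^bsub>G\<^esub> (f i)) \<in> carrier G" using fi group.inv_closed[OF assms(2)] by simp
  have "h (eval_word G (mapw f (c # v))) = h (if b then f i else inv\<^bsub>G\<^esub> (f i)) \<otimes>\<^bsub>K\<^esub> h (eval_word G (mapw f v))"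
    using hom_mult[OF assms(1) e F] by (simp add: c)
  also have "\<dots> = eval_word K (mapw (\<lambda>i. h (f i)) (c # v))" using IH hi by (simp add: c)
  finally show ?case .
qed

section \<open>Word length bounds\<close>

lemma peq_red_sub': "\<forall>r\<in>Rel. red (sub \<sigma> r) = [] \<Longrightarrow> (u, v) \<in> peq Gn Rel \<Longrightarrow> red (sub \<sigma> u) = red (sub \<sigma> v)"
  by (rule peq_red_sub) auto

lemma wl_upper:
  assumes "set l \<subseteq> S \<union> m_inv G ` S" "foldr (\<otimes>\<^bsub>G\<^esub>) l \<one>\<^bsub>G\<^esub> = g"
  shows "word_length G S g \<le> length l"
proof -
  have "\<exists>l'. length l' = length l \<and> set l' \<subseteq> S \<union> m_inv G ` S \<and> foldr (\<otimes>\<^bsub>G\<^esub>) l' \<one>\<^bsub>G\<^esub> = g"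
    using assms by (intro exI[of _ l]) simp
  then show ?thesis unfolding word_length_def by (rule Least_le)
qed

lemma wl_witness:
  assumes "set l \<subseteq> S \<union> m_inv G ` S" "foldr (\<otimes>\<^bsub>G\<^esub>) l \<one>\<^bsub>G\<^esub> = g"
  shows "\<exists>l'. length l' = word_length G S g \<and> set l' \<subseteq> S \<union> m_inv G ` S \<and> foldr (\<otimes>\<^bsub>G\<^esub>) l' \<one>\<^bsub>G\<^esub> = g"
proof -
  have "\<exists>l'. length l' = length l \<and> set l' \<subseteq> S \<union> m_inv G ` S \<and> foldr (\<otimes>\<^bsub>G\<^esub>) l' \<one>\<^bsub>G\<^esub> = g"
    using assms by (intro exI[of _ l]) simp
  then have "\<exists>n l'. length l' = n \<and> set l' \<subseteq> S \<union> m_inv G ` S \<and> foldr (\<otimes>\<^bsub>G\<^esub>) l' \<one>\<^bsub>G\<^esub> = g"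
    by blast
  then show ?thesis unfolding word_length_def by (rule LeastI_ex)
qed

lemma foldr_closed: "monoid G \<Longrightarrow> set l \<subseteq> carrier G \<Longrightarrow> foldr (\<otimes>\<^bsub>G\<^esub>) l \<one>\<^bsub>G\<^esub> \<in> carrier G"
  by (induction l) (auto intro: monoid.m_closed)

lemma list_bound:
  assumes rel: "\<forall>r\<in>Rel. red (sub \<sigma> r) = []"
    and S: "\<And>c. c \<in> S \<union> m_inv (pres Gn Rel) ` S \<Longrightarrow>
              \<exists>wc\<in>words Gn. c = peq Gn Rel `` {wc} \<and> length (red (sub \<sigma> wc)) \<le> 1"
  shows "set l \<subseteq> S \<union> m_inv (pres Gn Rel) ` S \<Longrightarrow> foldr (\<otimes>\<^bsub>pres Gn Rel\<^esub>) l \<one>\<^bsub>pres Gn Rel\<^esub> = peq Gn Rel `` {w}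
     \<Longrightarrow> w \<in> words Gn \<Longrightarrow> length (red (sub \<sigma> w)) \<le> length l"
proof (induction l arbitrary: w)
  case Nil
  then have "peq Gn Rel `` {w} = peq Gn Rel `` {[]}" by (simp add: pres_one)
  then have "(w, []) \<in> peq Gn Rel" by (rule class_eqD) simp
  then have "red (sub \<sigma> w) = red (sub \<sigma> [])" by (rule peq_red_sub'[OF rel])
  then show ?case by simp
next
  case (Cons c l)
  have "c \<in> S \<union> m_inv (pres Gn Rel) ` S" using Cons.prems(1) by simp
  from S[OF this] obtain wc where wc: "wc \<in> words Gn" "c = peq Gn Rel `` {wc}" "length (red (sub \<sigma> wc)) \<le> 1"
    by blast
  have sl: "set l \<subseteq> S \<union> m_inv (pres Gn Rel) ` S" using Cons.prems(1) by simp
  have "set l \<subseteq> carrier (pres Gn Rel)"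
  proof
    fix e assume "e \<in> set l"
    then have "e \<in> S \<union> m_inv (pres Gn Rel) ` S" using sl by blast
    from S[OF this] obtain we where "we \<in> words Gn" "e = peq Gn Rel `` {we}" by blast
    then show "e \<in> carrier (pres Gn Rel)" by (simp add: class_in_carrier)
  qed
  then have "foldr (\<otimes>\<^bsub>pres Gn Rel\<^esub>) l \<one>\<^bsub>pres Gn Rel\<^esub> \<in> carrier (pres Gn Rel)"
    by (rule foldr_closed[OF group.is_monoid[OF group_pres]])
  then obtain w' where w': "w' \<in> words Gn" "foldr (\<otimes>\<^bsub>pres Gn Rel\<^esub>) l \<one>\<^bsub>pres Gn Rel\<^esub> = peq Gn Rel `` {w'}"
    unfolding pres_carrier_iff by blast
  have IH: "length (red (sub \<sigma> w')) \<le> length l" by (rule Cons.IH[OF sl w'(2) w'(1)])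
  have "peq Gn Rel `` {wc @ w'} = c \<otimes>\<^bsub>pres Gn Rel\<^esub> foldr (\<otimes>\<^bsub>pres Gn Rel\<^esub>) l \<one>\<^bsub>pres Gn Rel\<^esub>"
    by (simp only: pres_mult_class[OF wc(1) w'(1)] wc(2) w'(2))
  also have "\<dots> = peq Gn Rel `` {w}" using Cons.prems(2) by simp
  finally have "(wc @ w', w) \<in> peq Gn Rel" by (rule class_eqD) (rule Cons.prems(3))
  then have "red (sub \<sigma> (wc @ w')) = red (sub \<sigma> w)" by (rule peq_red_sub'[OF rel])
  moreover have "pushall (sub \<sigma> wc) (red (sub \<sigma> w')) = pushall (red (sub \<sigma> wc)) (red (sub \<sigma> w'))"
    by (rule pushall_red[OF red_reduced])
  ultimately have "red (sub \<sigma> w) = pushall (red (sub \<sigma> wc)) (red (sub \<sigma> w'))"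
    by (simp add: red_append)
  then have "length (red (sub \<sigma> w)) \<le> length (red (sub \<sigma> wc)) + length (red (sub \<sigma> w'))"
    using length_pushall[of "red (sub \<sigma> wc)" "red (sub \<sigma> w')"] by simp
  then show ?case using IH wc(3) by simp
qed

lemma wl_lower:
  assumes rel: "\<forall>r\<in>Rel. red (sub \<sigma> r) = []"
    and S: "\<And>c. c \<in> S \<union> m_inv (pres Gn Rel) ` S \<Longrightarrow>
              \<exists>wc\<in>words Gn. c = peq Gn Rel `` {wc} \<and> length (red (sub \<sigma> wc)) \<le> 1"
    and l: "set l \<subseteq> S \<union> m_inv (pres Gn Rel) ` S" "foldr (\<otimes>\<^bsub>pres Gn Rel\<^esub>) l \<one>\<^bsub>pres Gn Rel\<^esub> = g"
    and g: "g = peq Gn Rel `` {w}" "w \<in> words Gn"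
  shows "length (red (sub \<sigma> w)) \<le> word_length (pres Gn Rel) S g"
proof -
  obtain l' where l': "length l' = word_length (pres Gn Rel) S g" "set l' \<subseteq> S \<union> m_inv (pres Gn Rel) ` S"
     "foldr (\<otimes>\<^bsub>pres Gn Rel\<^esub>) l' \<one>\<^bsub>pres Gn Rel\<^esub> = g"
    using wl_witness[OF l] by blast
  have "length (red (sub \<sigma> w)) \<le> length l'"
    using list_bound[OF rel S l'(2)] l'(3) g by simp
  then show ?thesis using l'(1) by simp
qed




section \<open>Free bases\<close>

lemma (in monoid) foldr_append_prod:
  "set xs \<subseteq> carrier G \<Longrightarrow> set ys \<subseteq> carrier G \<Longrightarrow>
   foldr (\<otimes>) (xs @ ys) \<one> = foldr (\<otimes>) xs \<one> \<otimes> foldr (\<otimes>) ys \<one>"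
proof (induction xs)
  case Nil then show ?case using foldr_closed[OF monoid_axioms, of ys] by simp
next
  case (Cons a xs)
  then show ?case using foldr_closed[OF monoid_axioms, of xs] foldr_closed[OF monoid_axioms, of ys]
    by (simp add: m_assoc)
qed

context group begin

lemma foldr_rev_inv: "set l \<subseteq> carrier G \<Longrightarrow> foldr (\<otimes>) (rev (map (m_inv G) l)) \<one> = inv (foldr (\<otimes>) l \<one>)"
proof (induction l)
  case (Cons a l)
  have c: "foldr (\<otimes>) l \<one> \<in> carrier G" using Cons.prems foldr_closed[OF is_monoid, of l] by simp
  have s: "set (rev (map (m_inv G) l)) \<subseteq> carrier G" using Cons.prems by auto
  have "foldr (\<otimes>) (rev (map (m_inv G) (a # l))) \<one> = foldr (\<otimes>) (rev (map (m_inv G) l)) \<one> \<otimes> foldr (\<otimes>) [inv a] \<one>"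
    using Cons.prems s foldr_append_prod[of "rev (map (m_inv G) l)" "[inv a]"] by simp
  also have "\<dots> = inv (foldr (\<otimes>) l \<one>) \<otimes> inv a" using Cons by simp
  also have "\<dots> = inv (foldr (\<otimes>) (a # l) \<one>)" using Cons.prems c by (simp add: inv_mult_group)
  finally show ?case .
qed simp

lemma gen_list:
  assumes AC: "A \<subseteq> carrier G"
  shows "x \<in> generate G A \<Longrightarrow> \<exists>l. set l \<subseteq> A \<union> m_inv G ` A \<and> foldr (\<otimes>) l \<one> = x"
proof (induction rule: generate.induct)
  case one then show ?case by (intro exI[of _ "[]"]) simp
next
  case (incl h) then show ?case using AC by (intro exI[of _ "[h]"]) auto
next
  case (inv h) then show ?case using AC by (intro exI[of _ "[inv h]"]) auto
next
  case (eng h1 h2)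
  then obtain l1 l2 where l: "set l1 \<subseteq> A \<union> m_inv G ` A" "foldr (\<otimes>) l1 \<one> = h1"
    "set l2 \<subseteq> A \<union> m_inv G ` A" "foldr (\<otimes>) l2 \<one> = h2" by blast
  have "set l1 \<subseteq> carrier G" "set l2 \<subseteq> carrier G" using l AC by auto
  then show ?case using l by (intro exI[of _ "l1 @ l2"]) (simp add: foldr_append_prod del: foldr_append)
qed

lemma ew_invw: "fst ` set w \<subseteq> carrier G \<Longrightarrow> eval_word G (invw w) = inv (eval_word G w)"
proof (induction w)
  case (Cons c w)
  obtain x b where c: "c = (x, b)" by (cases c)
  have x: "x \<in> carrier G" using Cons.prems c by auto
  have E: "eval_word G w \<in> carrier G" using Cons.prems by (intro ew_closed') auto
  have "eval_word G (invw (c # w)) = eval_word G (invw w) \<otimes> eval_word G [flip c]"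
    using Cons.prems by (simp del: ew_Cons add: ew_append' flip_def c)
  then show ?case using Cons x E by (cases b) (auto simp: c flip_def inv_mult_group)
qed simp

lemma free_basis_D: "free_basis G R \<Longrightarrow> w \<noteq> [] \<Longrightarrow> reduced w \<Longrightarrow> fst ` set w \<subseteq> R \<Longrightarrow> eval_word G w \<noteq> \<one>"
  unfolding free_basis_def by simp

lemma free_uniq:
  assumes fb: "free_basis G R"
  shows "reduced w1 \<Longrightarrow> reduced w2 \<Longrightarrow> fst ` set w1 \<subseteq> R \<Longrightarrow> fst ` set w2 \<subseteq> R \<Longrightarrow>
    eval_word G w1 = eval_word G w2 \<Longrightarrow> w1 = w2"
proof (induction w1 arbitrary: w2)
  case Nil
  show ?case
  proof (rule ccontr)
    assume ne: "[] \<noteq> w2"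
    have "eval_word G w2 \<noteq> \<one>" using free_basis_D[OF fb] ne Nil.prems(2,4) by simp
    then show False using Nil.prems(5) by simp
  qed
next
  case (Cons c w1)
  have RC: "R \<subseteq> carrier G" using fb by (simp add: free_basis_def)
  show ?case
  proof (cases "w2 = []")
    case True
    have "eval_word G (c # w1) \<noteq> \<one>" using free_basis_D[OF fb, of "c # w1"] Cons.prems(1,3) by blast
    then show ?thesis using Cons.prems(5) True by simp
  next
    case False
    then obtain c2 w2' where Cons2: "w2 = c2 # w2'" by (cases w2) auto
    obtain x b where c: "c = (x, b)" by (cases c)
    have x: "x \<in> carrier G" using Cons.prems(3) c RC by auto
    have E1: "eval_word G w1 \<in> carrier G" using Cons.prems(3) RC by (intro ew_closed') auto
    have E2: "eval_word G w2' \<in> carrier G" using Cons.prems(4) Cons2 RC by (intro ew_closed') auto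
    show ?thesis
    proof (cases "c2 = c")
      case T: True
      have "(if b then x else inv x) \<otimes> eval_word G w1 = (if b then x else inv x) \<otimes> eval_word G w2'"
        using Cons.prems(5) Cons2 T by (simp add: c)
      then have "eval_word G w1 = eval_word G w2'" using x E1 E2 by (cases b) auto
      moreover have "reduced w1" "reduced w2'" using Cons.prems(1,2) Cons2 by (auto simp: reduced_Cons)
      moreover have "fst ` set w1 \<subseteq> R" "fst ` set w2' \<subseteq> R" using Cons.prems(3,4) Cons2 by auto
      ultimately have "w1 = w2'" using Cons.IH by blast
      then show ?thesis using T Cons2 by simp
    next
      case F: False
      define W where "W = invw w2 @ (c # w1)"
      have rw2: "reduced (invw w2)" using Cons.prems(2) by (simp add: reduced_rev_map_flip)
      have lst: "last (invw w2) = flip c2" using Cons2 by simp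
      have ncn: "\<not> cn (flip c2) c" using F by (simp add: cn_iff_flip)
      have r: "reduced W" unfolding W_def reduced_append
        using rw2 Cons.prems(1) lst ncn by simp
      have s: "fst ` set W \<subseteq> R" unfolding W_def using Cons.prems(3,4) by (simp add: image_Un)
      have sc1: "fst ` set (c # w1) \<subseteq> carrier G" using Cons.prems(3) RC by blast
      have sc2: "fst ` set w2 \<subseteq> carrier G" using Cons.prems(4) RC by blast
      have sc3: "fst ` set (invw w2) \<subseteq> carrier G" using sc2 by simp
      have E2c: "eval_word G w2 \<in> carrier G" by (rule ew_closed'[OF sc2])
      have "eval_word G W = eval_word G (invw w2) \<otimes> eval_word G (c # w1)"
        unfolding W_def by (rule ew_append'[OF sc3 sc1])
      also have "\<dots> = inv (eval_word G w2) \<otimes> eval_word G w2"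
        by (simp only: ew_invw[OF sc2] Cons.prems(5))
      also have "\<dots> = \<one>" by (rule l_inv[OF E2c])
      finally have "eval_word G W = \<one>" .
      moreover have "W \<noteq> []" by (simp add: W_def)
      ultimately show ?thesis using free_basis_D[OF fb _ r s] by blast
    qed
  qed
qed

definition cv :: "'a set \<Rightarrow> 'a \<Rightarrow> 'a \<times> bool" where
  "cv R c = (if c \<in> R then (c, True) else (inv c, False))"

lemma cv_props:
  assumes "R \<subseteq> carrier G" "set l \<subseteq> R \<union> m_inv G ` R"
  shows "fst ` set (map (cv R) l) \<subseteq> R" "eval_word G (map (cv R) l) = foldr (\<otimes>) l \<one>"
proof -
  show "fst ` set (map (cv R) l) \<subseteq> R"
  proof
    fix y assume "y \<in> fst ` set (map (cv R) l)"
    then obtain c where c: "c \<in> set l" "y = fst (cv R c)" by auto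
    then have "c \<in> R \<or> (\<exists>r\<in>R. c = inv r)" using assms(2) by auto
    then show "y \<in> R" using c assms(1) by (auto simp: cv_def)
  qed
  show "eval_word G (map (cv R) l) = foldr (\<otimes>) l \<one>" using assms(2)
  proof (induction l)
    case (Cons a l)
    have "a \<in> R \<union> m_inv G ` R" using Cons.prems by simp
    then have "a \<in> carrier G" using assms(1) by auto
    then have e: "(if snd (cv R a) then fst (cv R a) else inv (fst (cv R a))) = a" by (simp add: cv_def)
    have "eval_word G (map (cv R) (a # l)) = (if snd (cv R a) then fst (cv R a) else inv (fst (cv R a))) \<otimes> eval_word G (map (cv R) l)"
      by (cases "cv R a") simp
    then show ?case using Cons e by simp
  qed simp
qed

lemma cv_cn:
  assumes "R \<subseteq> carrier G" "a \<in> R \<union> m_inv G ` R" "b \<in> R \<union> m_inv G ` R" "cn (cv R a) (cv R b)"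
  shows "a \<otimes> b = \<one>"
proof -
  have ac: "a \<in> carrier G" "b \<in> carrier G" using assms(1-3) by auto
  have fl: "cv R b = flip (cv R a)" using assms(4) by (simp add: cn_iff_flip)
  show ?thesis
  proof (cases "a \<in> R")
    case True
    then have "cv R b = (a, False)" using fl by (simp add: cv_def flip_def)
    then have "b \<notin> R" "inv b = a" by (auto simp: cv_def split: if_splits)
    then show ?thesis using ac by (metis l_inv)
  next
    case False
    then have "cv R b = (inv a, True)" using fl by (simp add: cv_def flip_def)
    then have "b = inv a" by (auto simp: cv_def split: if_splits)
    then show ?thesis using ac by simp
  qed
qed

lemma min_reduced:
  assumes RC: "R \<subseteq> carrier G" and l: "set l \<subseteq> R \<union> m_inv G ` R" "foldr (\<otimes>) l \<one> = g"
    and len: "length l = word_length G R g"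
  shows "reduced (map (cv R) l)"
proof (rule ccontr)
  assume "\<not> reduced (map (cv R) l)"
  then obtain i where i: "Suc i < length l" "cn (cv R (l ! i)) (cv R (l ! Suc i))"
    unfolding reduced_def cn_def by auto
  have "l ! i \<in> set l" "l ! Suc i \<in> set l" using i(1) by simp_all
  then have mem: "l ! i \<in> R \<union> m_inv G ` R" "l ! Suc i \<in> R \<union> m_inv G ` R" using l(1) by blast+
  have one: "l ! i \<otimes> l ! Suc i = \<one>" by (rule cv_cn[OF RC mem i(2)])
  have lc: "set l \<subseteq> carrier G" using l(1) RC by auto
  define l' where "l' = take i l @ drop (Suc (Suc i)) l"
  have split: "l = take i l @ l ! i # l ! Suc i # drop (Suc (Suc i)) l"
    using i(1) by (simp add: Cons_nth_drop_Suc)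
  have st: "set (drop (Suc (Suc i)) l) \<subseteq> carrier G"
    using lc by (auto dest: in_set_dropD)
  have D: "foldr (\<otimes>) (drop (Suc (Suc i)) l) \<one> \<in> carrier G" by (rule foldr_closed[OF is_monoid st])
  have ic: "l ! i \<in> carrier G" "l ! Suc i \<in> carrier G" using mem RC by auto
  have "foldr (\<otimes>) (take i l @ l ! i # l ! Suc i # drop (Suc (Suc i)) l) \<one> =
      foldr (\<otimes>) (take i l) (l ! i \<otimes> (l ! Suc i \<otimes> foldr (\<otimes>) (drop (Suc (Suc i)) l) \<one>))" by simp
  also have "l ! i \<otimes> (l ! Suc i \<otimes> foldr (\<otimes>) (drop (Suc (Suc i)) l) \<one>) = foldr (\<otimes>) (drop (Suc (Suc i)) l) \<one>"
    using one ic D by (simp add: m_assoc[symmetric])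
  also have "foldr (\<otimes>) (take i l) (foldr (\<otimes>) (drop (Suc (Suc i)) l) \<one>) = foldr (\<otimes>) l' \<one>"
    by (simp add: l'_def)
  finally have "foldr (\<otimes>) l' \<one> = g" using l(2) split by simp
  moreover have "set l' \<subseteq> R \<union> m_inv G ` R" using l(1) by (auto simp: l'_def dest: in_set_takeD in_set_dropD)
  ultimately have "word_length G R g \<le> length l'" by (intro wl_upper) auto
  moreover have "length l' < length l" using i(1) by (simp add: l'_def)
  ultimately show False using len by simp
qed

end




lemma words_mono: "Gn \<subseteq> Gn' \<Longrightarrow> w \<in> words Gn \<Longrightarrow> w \<in> words Gn'"
  by (auto simp: words_def)

lemma peq_mono:
  assumes "Gn \<subseteq> Gn'" "Rel \<subseteq> Rel'"
  shows "(u, v) \<in> peq Gn Rel \<Longrightarrow> (u, v) \<in> peq Gn' Rel'"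
proof (induction rule: peq.induct)
  case (refl w) then show ?case using words_mono[OF assms(1)] by (auto intro: peq.refl)
next
  case (sym u v) then show ?case by (blast intro: peq.sym)
next
  case (trans u v w) then show ?case by (blast intro: peq.trans)
next
  case (cancel u v x b) then show ?case using words_mono[OF assms(1)] assms(1) by (intro peq.cancel) auto
next
  case (rel u v r) then show ?case using words_mono[OF assms(1)] assms(2) by (intro peq.rel) auto
qed

lemma image_class_mono:
  assumes "Gn \<subseteq> Gn'" "Rel \<subseteq> Rel'" "w \<in> words Gn"
  shows "peq Gn' Rel' `` (peq Gn Rel `` {w}) = peq Gn' Rel' `` {w}"
proof (intro equalityI subsetI)
  fix x assume "x \<in> peq Gn' Rel' `` (peq Gn Rel `` {w})"
  then obtain w' where "(w, w') \<in> peq Gn Rel" "(w', x) \<in> peq Gn' Rel'" by auto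
  then show "x \<in> peq Gn' Rel' `` {w}" using peq_mono[OF assms(1,2)] by (blast intro: peq.trans)
next
  fix x assume "x \<in> peq Gn' Rel' `` {w}"
  moreover have "(w, w) \<in> peq Gn Rel" using assms(3) by (rule peq.refl)
  ultimately show "x \<in> peq Gn' Rel' `` (peq Gn Rel `` {w})" by blast
qed

lemma image_class_hom:
  assumes "Gn \<subseteq> Gn'" "Rel \<subseteq> Rel'"
  shows "(\<lambda>A. peq Gn' Rel' `` A) \<in> hom (pres Gn Rel) (pres Gn' Rel')"
proof (rule homI)
  fix A assume "A \<in> carrier (pres Gn Rel)"
  then obtain a where a: "a \<in> words Gn" "A = peq Gn Rel `` {a}" by (auto simp: pres_carrier_iff)
  then show "peq Gn' Rel' `` A \<in> carrier (pres Gn' Rel')"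
    using image_class_mono[OF assms a(1)] words_mono[OF assms(1)] by (simp add: class_in_carrier)
next
  fix A B assume "A \<in> carrier (pres Gn Rel)" "B \<in> carrier (pres Gn Rel)"
  then obtain a b where a: "a \<in> words Gn" "A = peq Gn Rel `` {a}" "b \<in> words Gn" "B = peq Gn Rel `` {b}"
    by (auto simp: pres_carrier_iff)
  have a': "a \<in> words Gn'" "b \<in> words Gn'" using a words_mono[OF assms(1)] by auto
  show "peq Gn' Rel' `` (A \<otimes>\<^bsub>pres Gn Rel\<^esub> B) = peq Gn' Rel' `` A \<otimes>\<^bsub>pres Gn' Rel'\<^esub> peq Gn' Rel' `` B"
    using a a' by (simp add: pres_mult_class image_class_mono[OF assms])
qed

lemma ew_pres:
  assumes "\<forall>i\<in>fst ` set v. f i = peq Gn Rel `` {\<omega> i} \<and> \<omega> i \<in> words Gn"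
  shows "eval_word (pres Gn Rel) (mapw f v) = peq Gn Rel `` {sub \<omega> v} \<and> sub \<omega> v \<in> words Gn"
  using assms
proof (induction v)
  case Nil then show ?case by (simp add: pres_one)
next
  case (Cons c v)
  obtain i b where c: "c = (i, b)" by (cases c)
  have fi: "f i = peq Gn Rel `` {\<omega> i}" "\<omega> i \<in> words Gn" using Cons.prems c by auto
  have IH: "eval_word (pres Gn Rel) (mapw f v) = peq Gn Rel `` {sub \<omega> v}" "sub \<omega> v \<in> words Gn"
    using Cons by auto
  show ?case
  proof (cases b)
    case True then show ?thesis using fi IH by (simp add: c pres_mult_class)
  next
    case False then show ?thesis using fi IH by (simp add: c pres_mult_class pres_inv_class)
  qed
qed

lemma sub_sub: "sub \<sigma> (sub \<omega> v) = sub (\<lambda>i. sub \<sigma> (\<omega> i)) v"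
proof (induction v)
  case (Cons c v) then show ?case by (cases c) (simp add: sub_invw)
qed simp

lemma sub_single: "sub (\<lambda>i. [(i, True)]) v = v"
proof (induction v)
  case (Cons c v) then show ?case by (cases c) (simp add: flip_def)
qed simp

lemma reduced_mapw: "reduced (mapw f v) \<Longrightarrow> reduced v"
  unfolding reduced_def mapw_def
proof (intro allI impI)
  fix i assume r: "\<forall>i. Suc i < length (map (\<lambda>(i, b). (f i, b)) v) \<longrightarrow>
           \<not> (fst (map (\<lambda>(i, b). (f i, b)) v ! i) = fst (map (\<lambda>(i, b). (f i, b)) v ! Suc i) \<and>
              snd (map (\<lambda>(i, b). (f i, b)) v ! i) \<noteq> snd (map (\<lambda>(i, b). (f i, b)) v ! Suc i))"
    and i: "Suc i < length v"
  have "i < length v" using i by simp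
  then show "\<not> (fst (v ! i) = fst (v ! Suc i) \<and> snd (v ! i) \<noteq> snd (v ! Suc i))"
    using r[rule_format, of i] i by (cases "v ! i"; cases "v ! Suc i") auto
qed

context group begin

lemma comm_from_rel:
  assumes "u \<in> carrier G" "v \<in> carrier G" "inv u \<otimes> (inv v \<otimes> (u \<otimes> (v \<otimes> \<one>))) = \<one>"
  shows "u \<otimes> v = v \<otimes> u"
proof -
  have "inv (v \<otimes> u) \<otimes> (u \<otimes> v) = \<one>"
    using assms by (simp add: inv_mult_group m_assoc)
  then have "u \<otimes> v = (v \<otimes> u) \<otimes> \<one>"
    using inv_solve_left'[of "\<one>" "v \<otimes> u" "u \<otimes> v"] assms(1,2) by simp
  then show ?thesis using assms(1,2) by simp
qed

lemma mult_from_rel: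
  assumes "x \<in> carrier G" "y \<in> carrier G" "z \<in> carrier G" "x \<otimes> (y \<otimes> (inv z \<otimes> \<one>)) = \<one>"
  shows "x \<otimes> y = z"
proof -
  have "(x \<otimes> y) \<otimes> inv z = \<one>" using assms by (simp add: m_assoc)
  then have "inv (inv z) = x \<otimes> y" using assms by (intro inv_equality) auto
  then show ?thesis using assms by simp
qed

lemma amalg_from_rel:
  assumes "a \<in> carrier G" "y \<in> carrier G" "x \<in> carrier G" "a \<otimes> (y \<otimes> (inv x \<otimes> \<one>)) = \<one>"
  shows "a = x \<otimes> inv y"
proof -
  have "a \<otimes> (y \<otimes> inv x) = \<one>" using assms by simp
  then have "inv (y \<otimes> inv x) = a" using assms by (intro inv_equality) auto
  then show ?thesis using assms by (simp add: inv_mult_group)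
qed

lemma conj_from_rel:
  assumes "s \<in> carrier G" "x \<in> carrier G" "y \<in> carrier G" "z \<in> carrier G"
    "inv s \<otimes> (x \<otimes> (z \<otimes> (s \<otimes> (inv z \<otimes> (inv y \<otimes> \<one>))))) = \<one>"
  shows "inv s \<otimes> (x \<otimes> z) \<otimes> s = y \<otimes> z"
proof -
  have "(inv s \<otimes> (x \<otimes> z) \<otimes> s) \<otimes> inv (y \<otimes> z) = \<one>"
    using assms by (simp add: m_assoc inv_mult_group)
  then have "inv (inv (y \<otimes> z)) = inv s \<otimes> (x \<otimes> z) \<otimes> s" using assms by (intro inv_equality) auto
  then show ?thesis using assms by simp
qed

lemma key_calc:
  assumes "xx \<in> carrier G" "yy \<in> carrier G" "zz \<in> carrier G"
    "xx \<otimes> yy = yy \<otimes> xx" "xx \<otimes> zz = zz \<otimes> xx" "zz \<otimes> yy = yy \<otimes> zz"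
  shows "(xx \<otimes> zz) \<otimes> inv (xx \<otimes> inv yy) = yy \<otimes> zz"
proof -
  have c: "xx \<otimes> (yy \<otimes> zz) = (yy \<otimes> zz) \<otimes> xx" by (rule comm_mult[OF assms(1-5)])
  have "(xx \<otimes> zz) \<otimes> inv (xx \<otimes> inv yy) = xx \<otimes> (zz \<otimes> yy) \<otimes> inv xx"
    using assms(1-3) by (simp add: inv_mult_group m_assoc)
  also have "\<dots> = xx \<otimes> (yy \<otimes> zz) \<otimes> inv xx" by (simp only: assms(6))
  also have "\<dots> = (yy \<otimes> zz) \<otimes> xx \<otimes> inv xx" by (simp only: c)
  also have "\<dots> = yy \<otimes> zz" using assms(1-3) by (simp add: m_assoc)
  finally show ?thesis .
qed

lemma hom_foldr:
  assumes "h \<in> hom G K" "group K" "set l \<subseteq> carrier G"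
  shows "h (foldr (\<otimes>) l \<one>) = foldr (\<otimes>\<^bsub>K\<^esub>) (map h l) \<one>\<^bsub>K\<^esub>"
  using assms(3)
proof (induction l)
  case Nil then show ?case using hom_one[OF assms(1) is_group assms(2)] by simp
next
  case (Cons a l)
  have "foldr (\<otimes>) l \<one> \<in> carrier G" using Cons.prems foldr_closed[OF is_monoid, of l] by simp
  then show ?case using Cons hom_mult[OF assms(1)] by simp
qed

end




section \<open>The groups G1 and G2\<close>

lemma group_G1: "group (G1 H p d)" by (simp add: G1_def group_pres)
lemma group_G2: "group (G2 H p d)" by (simp add: G2_def group_pres)

lemma el1_class: "el1 H p d x = peq (gens1 H p) (rels1 H p d) `` {[(x, True)]}"
  by (simp add: el1_def gen_el_def)

lemma gens1_GX: "i \<in> {1..p} \<Longrightarrow> GX i \<in> gens1 H p" by (simp add: gens1_def)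
lemma gens1_GY: "i \<in> {1..p} \<Longrightarrow> GY i \<in> gens1 H p" by (simp add: gens1_def)
lemma gens1_GZ: "i \<in> {1..p} \<Longrightarrow> GZ i \<in> gens1 H p" by (simp add: gens1_def)
lemma gens1_GH: "a \<in> carrier H \<Longrightarrow> GH a \<in> gens1 H p" by (simp add: gens1_def)
lemma gens1_GS1: "GS1 \<in> gens1 H p" by (simp add: gens1_def)
lemma gens1_sub: "gens1 H p \<subseteq> gens2 H p" unfolding gens2_def by (rule Un_upper1)
lemma rels1_sub: "rels1 H p d \<subseteq> rels2 H p d" unfolding rels2_def by (rule Un_upper1)

lemma rels1_A: "a \<in> carrier H \<Longrightarrow> b \<in> carrier H \<Longrightarrow>
   [(GH a, True), (GH b, True), (GH (a \<otimes>\<^bsub>H\<^esub> b), False)] \<in> rels1 H p d"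
  unfolding rels1_def by (rule UnI1, rule UnI1, rule UnI1, rule UnI1, rule UnI1) blast
lemma rels1_XY: "i \<in> {1..p} \<Longrightarrow> j \<in> {1..p} \<Longrightarrow> comm_rel (GX i) (GY j) \<in> rels1 H p d"
  unfolding rels1_def by (rule UnI1, rule UnI1, rule UnI1, rule UnI1, rule UnI2) blast
lemma rels1_XZ: "i \<in> {1..p} \<Longrightarrow> j \<in> {1..p} \<Longrightarrow> comm_rel (GX i) (GZ j) \<in> rels1 H p d"
  unfolding rels1_def by (rule UnI1, rule UnI1, rule UnI1, rule UnI2) blast
lemma rels1_YZ: "i \<in> {1..p} \<Longrightarrow> j \<in> {1..p} \<Longrightarrow> comm_rel (GY i) (GZ j) \<in> rels1 H p d"
  unfolding rels1_def by (rule UnI1, rule UnI1, rule UnI2) blast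
lemma rels1_E: "i \<in> {1..p} \<Longrightarrow> [(GH (d i), True), (GY i, True), (GX i, False)] \<in> rels1 H p d"
  unfolding rels1_def by (rule UnI1, rule UnI2) blast
lemma rels2_new: "i \<in> {1..p} \<Longrightarrow>
   [(GS2, False), (GX i, True), (GZ i, True), (GS2, True), (GZ i, False), (GY i, False)] \<in> rels2 H p d"
  unfolding rels2_def by (rule UnI2) blast

lemma el1_carrier: "x \<in> gens1 H p \<Longrightarrow> el1 H p d x \<in> carrier (G1 H p d)"
  by (simp add: el1_def G1_def gen_el_carrier)

lemma G1_rel:
  assumes "r \<in> rels1 H p d" "r \<in> words (gens1 H p)"
  shows "eval_word (G1 H p d) (map (\<lambda>(x, b). (el1 H p d x, b)) r) = \<one>\<^bsub>G1 H p d\<^esub>"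
  using relator_one[OF assms] by (simp add: G1_def el1_def)

lemma G2_rel:
  assumes "r \<in> rels2 H p d" "r \<in> words (gens2 H p)"
  shows "eval_word (G2 H p d) (map (\<lambda>(x, b). (gen_el (gens2 H p) (rels2 H p d) x, b)) r) = \<one>\<^bsub>G2 H p d\<^esub>"
  using relator_one[OF assms] by (simp add: G2_def)

lemma comm_G1:
  assumes "u \<in> gens1 H p" "v \<in> gens1 H p" "comm_rel u v \<in> rels1 H p d"
  shows "el1 H p d u \<otimes>\<^bsub>G1 H p d\<^esub> el1 H p d v = el1 H p d v \<otimes>\<^bsub>G1 H p d\<^esub> el1 H p d u"
proof -
  have w: "comm_rel u v \<in> words (gens1 H p)" using assms by (simp add: comm_rel_def)
  have e: "eval_word (G1 H p d) (map (\<lambda>(x, b). (el1 H p d x, b)) (comm_rel u v)) = \<one>\<^bsub>G1 H p d\<^esub>"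
    by (rule G1_rel[OF assms(3) w])
  show ?thesis
    by (rule group.comm_from_rel[OF group_G1 el1_carrier[OF assms(1)] el1_carrier[OF assms(2)]])
       (use e in \<open>simp add: comm_rel_def\<close>)
qed

lemma comm_XY: "i \<in> {1..p} \<Longrightarrow> j \<in> {1..p} \<Longrightarrow>
  el1 H p d (GX i) \<otimes>\<^bsub>G1 H p d\<^esub> el1 H p d (GY j) = el1 H p d (GY j) \<otimes>\<^bsub>G1 H p d\<^esub> el1 H p d (GX i)"
  by (rule comm_G1[OF gens1_GX gens1_GY rels1_XY])

lemma comm_XZ: "i \<in> {1..p} \<Longrightarrow> j \<in> {1..p} \<Longrightarrow>
  el1 H p d (GX i) \<otimes>\<^bsub>G1 H p d\<^esub> el1 H p d (GZ j) = el1 H p d (GZ j) \<otimes>\<^bsub>G1 H p d\<^esub> el1 H p d (GX i)"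
  by (rule comm_G1[OF gens1_GX gens1_GZ rels1_XZ])

lemma comm_YZ: "i \<in> {1..p} \<Longrightarrow> j \<in> {1..p} \<Longrightarrow>
  el1 H p d (GY i) \<otimes>\<^bsub>G1 H p d\<^esub> el1 H p d (GZ j) = el1 H p d (GZ j) \<otimes>\<^bsub>G1 H p d\<^esub> el1 H p d (GY i)"
  by (rule comm_G1[OF gens1_GY gens1_GZ rels1_YZ])

lemma GH_mult:
  assumes "a \<in> carrier H" "b \<in> carrier H" "a \<otimes>\<^bsub>H\<^esub> b \<in> carrier H"
  shows "el1 H p d (GH a) \<otimes>\<^bsub>G1 H p d\<^esub> el1 H p d (GH b) = el1 H p d (GH (a \<otimes>\<^bsub>H\<^esub> b))"
proof -
  have r: "[(GH a, True), (GH b, True), (GH (a \<otimes>\<^bsub>H\<^esub> b), False)] \<in> rels1 H p d"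
    by (rule rels1_A[OF assms(1,2)])
  have w: "[(GH a, True), (GH b, True), (GH (a \<otimes>\<^bsub>H\<^esub> b), False)] \<in> words (gens1 H p)"
    using assms by (simp add: gens1_def)
  have c: "el1 H p d (GH a) \<in> carrier (G1 H p d)" "el1 H p d (GH b) \<in> carrier (G1 H p d)"
     "el1 H p d (GH (a \<otimes>\<^bsub>H\<^esub> b)) \<in> carrier (G1 H p d)"
    using assms by (simp_all add: el1_carrier gens1_GH)
  show ?thesis by (rule group.mult_from_rel[OF group_G1 c]) (use G1_rel[OF r w] in simp)
qed

lemma GH_hom:
  assumes "group H"
  shows "(\<lambda>a. el1 H p d (GH a)) \<in> hom H (G1 H p d)"
proof (rule homI)
  fix a assume "a \<in> carrier H"
  then show "el1 H p d (GH a) \<in> carrier (G1 H p d)" by (rule el1_carrier[OF gens1_GH])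
next
  fix a b assume ab: "a \<in> carrier H" "b \<in> carrier H"
  have abc: "a \<otimes>\<^bsub>H\<^esub> b \<in> carrier H" by (rule monoid.m_closed[OF group.is_monoid[OF assms] ab])
  show "el1 H p d (GH (a \<otimes>\<^bsub>H\<^esub> b)) = el1 H p d (GH a) \<otimes>\<^bsub>G1 H p d\<^esub> el1 H p d (GH b)"
    by (rule GH_mult[where p=p and d=d, OF ab abc, symmetric])
qed

lemma GH_d:
  assumes "i \<in> {1..p}" "d i \<in> carrier H"
  shows "el1 H p d (GH (d i)) = el1 H p d (GX i) \<otimes>\<^bsub>G1 H p d\<^esub> inv\<^bsub>G1 H p d\<^esub> el1 H p d (GY i)"
proof -
  have r: "[(GH (d i), True), (GY i, True), (GX i, False)] \<in> rels1 H p d"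
    using assms(1) by (rule rels1_E)
  have w: "[(GH (d i), True), (GY i, True), (GX i, False)] \<in> words (gens1 H p)"
    using assms by (simp add: gens1_def)
  have c: "el1 H p d (GH (d i)) \<in> carrier (G1 H p d)" "el1 H p d (GY i) \<in> carrier (G1 H p d)"
     "el1 H p d (GX i) \<in> carrier (G1 H p d)"
    using assms by (simp_all add: el1_carrier gens1_GH gens1_GX gens1_GY)
  show ?thesis by (rule group.amalg_from_rel[OF group_G1 c]) (use G1_rel[OF r w] in simp)
qed

lemma to_G2_hom: "to_G2 H p d \<in> hom (G1 H p d) (G2 H p d)"
proof -
  have "(\<lambda>A. peq (gens2 H p) (rels2 H p d) `` A) \<in> hom (G1 H p d) (G2 H p d)"
    unfolding G1_def G2_def by (rule image_class_hom[OF gens1_sub rels1_sub])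
  moreover have "to_G2 H p d = (\<lambda>A. peq (gens2 H p) (rels2 H p d) `` A)"
    by (rule ext) (simp add: to_G2_def)
  ultimately show ?thesis by simp
qed

lemma to_G2_el1: "x \<in> gens1 H p \<Longrightarrow> to_G2 H p d (el1 H p d x) = gen_el (gens2 H p) (rels2 H p d) x"
  unfolding to_G2_def el1_class gen_el_def
  by (rule image_class_mono[OF gens1_sub rels1_sub]) simp

lemma conj_G2:
  assumes "i \<in> {1..p}"
  shows "inv\<^bsub>G2 H p d\<^esub> s2_el H p d \<otimes>\<^bsub>G2 H p d\<^esub> (to_G2 H p d (a_el H p d i)) \<otimes>\<^bsub>G2 H p d\<^esub> s2_el H p d
     = to_G2 H p d (b_el H p d i)"
proof -
  let ?e = "gen_el (gens2 H p) (rels2 H p d)"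
  have ta: "to_G2 H p d (a_el H p d i) = ?e (GX i) \<otimes>\<^bsub>G2 H p d\<^esub> ?e (GZ i)"
    unfolding a_el_def using assms
    by (simp add: hom_mult[OF to_G2_hom] el1_carrier gens1_GX gens1_GZ to_G2_el1)
  have tb: "to_G2 H p d (b_el H p d i) = ?e (GY i) \<otimes>\<^bsub>G2 H p d\<^esub> ?e (GZ i)"
    unfolding b_el_def using assms
    by (simp add: hom_mult[OF to_G2_hom] el1_carrier gens1_GY gens1_GZ to_G2_el1)
  have r: "[(GS2, False), (GX i, True), (GZ i, True), (GS2, True), (GZ i, False), (GY i, False)] \<in> rels2 H p d"
    using assms by (rule rels2_new)
  have w: "[(GS2, False), (GX i, True), (GZ i, True), (GS2, True), (GZ i, False), (GY i, False)] \<in> words (gens2 H p)"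
    using assms by (simp add: gens2_def gens1_def)
  have c: "x \<in> gens2 H p \<Longrightarrow> ?e x \<in> carrier (G2 H p d)" for x by (simp add: G2_def gen_el_carrier)
  have g: "GS2 \<in> gens2 H p" "GX i \<in> gens2 H p" "GY i \<in> gens2 H p" "GZ i \<in> gens2 H p"
    using assms by (simp_all add: gens2_def gens1_def)
  have cc: "?e GS2 \<in> carrier (G2 H p d)" "?e (GX i) \<in> carrier (G2 H p d)" "?e (GY i) \<in> carrier (G2 H p d)"
    "?e (GZ i) \<in> carrier (G2 H p d)" using c g by simp_all
  show ?thesis unfolding ta tb s2_el_def
    by (rule group.conj_from_rel[OF group_G2 cc]) (use G2_rel[OF r w] in simp)
qed




fun sz :: "'h gen \<Rightarrow> (nat \<times> bool) list" where
  "sz (GZ i) = [(i, True)]"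
| "sz (GH a) = []"
| "sz (GX i) = []"
| "sz (GY i) = []"
| "sz GS1 = []"
| "sz GS2 = []"

lemma length_sz: "length (sz x) \<le> 1" by (cases x) auto

lemma red_invw_self: "red (invw g @ g) = []"
  using pushall_inv_cancel[of "[]" "invw g"] by (simp add: red_def)


lemma sz_rels: "\<forall>r\<in>rels1 H p d. red (sub sz r) = []"
proof
  fix r assume "r \<in> rels1 H p d"
  then consider (A) a b where "r = [(GH a, True), (GH b, True), (GH (a \<otimes>\<^bsub>H\<^esub> b), False)]"
    | (B) i j where "r = comm_rel (GX i) (GY j)"
    | (C) i j where "r = comm_rel (GX i) (GZ j)"
    | (D) i j where "r = comm_rel (GY i) (GZ j)"
    | (E) i where "r = [(GH (d i), True), (GY i, True), (GX i, False)]"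
    | (F) v where "r = comm_rel GS1 v"
    unfolding rels1_def by blast
  then show "red (sub sz r) = []"
  proof cases
    case A then show ?thesis by simp
  next
    case B then show ?thesis by (simp add: comm_rel_def)
  next
    case C then show ?thesis by (simp add: comm_rel_def red_def flip_def cn_def)
  next
    case D then show ?thesis by (simp add: comm_rel_def red_def flip_def cn_def)
  next
    case E then show ?thesis by simp
  next
    case F then show ?thesis using red_invw_self[of "sz v"] by (simp add: comm_rel_def)
  qed
qed

lemma Scond:
  assumes "\<forall>c\<in>S. \<exists>wc\<in>words Gn. c = peq Gn Rel `` {wc} \<and> length (sub \<sigma> wc) \<le> 1"
    and "c \<in> S \<union> m_inv (pres Gn Rel) ` S"
  shows "\<exists>wc\<in>words Gn. c = peq Gn Rel `` {wc} \<and> length (red (sub \<sigma> wc)) \<le> 1"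
proof (cases "c \<in> S")
  case True
  then obtain wc where "wc \<in> words Gn" "c = peq Gn Rel `` {wc}" "length (sub \<sigma> wc) \<le> 1" using assms(1) by blast
  then show ?thesis using length_red[of "sub \<sigma> wc"] by auto
next
  case False
  then obtain c' where c': "c' \<in> S" "c = inv\<^bsub>pres Gn Rel\<^esub> c'" using assms(2) by blast
  then obtain wc where wc: "wc \<in> words Gn" "c' = peq Gn Rel `` {wc}" "length (sub \<sigma> wc) \<le> 1" using assms(1) by blast
  have "c = peq Gn Rel `` {invw wc}" using c' wc by (simp add: pres_inv_class)
  moreover have "length (red (sub \<sigma> (invw wc))) \<le> 1"
    using length_red[of "sub \<sigma> (invw wc)"] wc(3) by (simp add: sub_invw)
  ultimately show ?thesis using wc(1) by auto
qed

lemma mapw_cong: "\<forall>i\<in>fst ` set v. f i = g i \<Longrightarrow> mapw f v = mapw g v"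
  by (induction v) auto

lemma eval_word_foldr: "eval_word G w = foldr (\<otimes>\<^bsub>G\<^esub>) (map (\<lambda>(x, b). if b then x else inv\<^bsub>G\<^esub> x) w) \<one>\<^bsub>G\<^esub>"
  by (induction w) auto

context group begin

lemma comm_ew2:
  assumes "\<forall>i\<in>fst ` set v. f i \<in> carrier G \<and> g i \<in> carrier G"
    and "\<forall>i\<in>fst ` set v. \<forall>j\<in>fst ` set v. f i \<otimes> g j = g j \<otimes> f i"
  shows "eval_word G (mapw f v) \<otimes> eval_word G (mapw g v) = eval_word G (mapw g v) \<otimes> eval_word G (mapw f v)"
proof (rule comm_ew)
  show "eval_word G (mapw f v) \<in> carrier G" using assms(1) by (intro ew_closed) auto
  show "\<forall>i\<in>fst ` set v. g i \<in> carrier G \<and> eval_word G (mapw f v) \<otimes> g i = g i \<otimes> eval_word G (mapw f v)"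
  proof
    fix j assume j: "j \<in> fst ` set v"
    have gj: "g j \<in> carrier G" using assms(1) j by blast
    have "\<forall>i\<in>fst ` set v. f i \<in> carrier G \<and> g j \<otimes> f i = f i \<otimes> g j"
    proof
      fix i assume i: "i \<in> fst ` set v"
      have "f i \<otimes> g j = g j \<otimes> f i" using assms(2) i j by blast
      moreover have "f i \<in> carrier G" using assms(1) i by blast
      ultimately show "f i \<in> carrier G \<and> g j \<otimes> f i = f i \<otimes> g j" by simp
    qed
    then have "g j \<otimes> eval_word G (mapw f v) = eval_word G (mapw f v) \<otimes> g j"
      by (rule comm_ew[OF gj])
    then show "g j \<in> carrier G \<and> eval_word G (mapw f v) \<otimes> g j = g j \<otimes> eval_word G (mapw f v)"
      using assms(1) j by auto
  qed
qed

end




lemma set_signs: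
  assumes "fst ` set w \<subseteq> A"
  shows "set (map (\<lambda>(x, b). if b then f x else m_inv G (f x)) w) \<subseteq> f ` A \<union> m_inv G ` f ` A"
proof
  fix y assume "y \<in> set (map (\<lambda>(x, b). if b then f x else m_inv G (f x)) w)"
  then obtain x b where xb: "(x, b) \<in> set w" "y = (if b then f x else m_inv G (f x))" by auto
  have "x \<in> A" using assms xb(1) by force
  then show "y \<in> f ` A \<union> m_inv G ` f ` A" using xb(2) by (cases b) auto
qed

lemma word_from_cert:
  assumes gH: "group H" and RC: "R \<subseteq> carrier H" and fb: "free_basis H R"
    and pal: "palindromic H R u"
  shows "\<exists>w. reduced w \<and> fst ` set w \<subseteq> R \<and> eval_word H w = u \<and> rev w = w \<and> length w = word_length H R u"
proof -
  obtain w where w: "reduced w" "fst ` set w \<subseteq> R" "eval_word H w = u" "rev w = w"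
    using pal unfolding palindromic_def by auto
  define lw where "lw = map (\<lambda>(x, b). if b then x else inv\<^bsub>H\<^esub> x) w"
  have slw: "set lw \<subseteq> R \<union> m_inv H ` R" using set_signs[OF w(2), of "\<lambda>x. x" H] by (simp add: lw_def)
  have flw: "foldr (\<otimes>\<^bsub>H\<^esub>) lw \<one>\<^bsub>H\<^esub> = u" using w(3) by (simp add: lw_def eval_word_foldr)
  obtain l where l: "length l = word_length H R u" "set l \<subseteq> R \<union> m_inv H ` R" "foldr (\<otimes>\<^bsub>H\<^esub>) l \<one>\<^bsub>H\<^esub> = u"
    using wl_witness[OF slw flw] by blast
  have red: "reduced (map (group.cv H R) l)" by (rule group.min_reduced[OF gH RC l(2,3,1)])
  have cvp: "fst ` set (map (group.cv H R) l) \<subseteq> R" "eval_word H (map (group.cv H R) l) = foldr (\<otimes>\<^bsub>H\<^esub>) l \<one>\<^bsub>H\<^esub>"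
    using group.cv_props[OF gH RC l(2)] by auto
  have "map (group.cv H R) l = w"
    by (rule group.free_uniq[OF gH fb red w(1) cvp(1) w(2)]) (simp add: cvp(2) l(3) w(3))
  then have "length w = word_length H R u" using l(1) by auto
  then show ?thesis using w by blast
qed

lemma index_word:
  assumes w: "reduced w" "fst ` set w \<subseteq> d ` {1..p}" "rev w = w"
  shows "\<exists>wi. mapw d wi = w \<and> fst ` set wi \<subseteq> {1..p} \<and> rev wi = wi \<and> reduced wi \<and> length wi = length w"
proof -
  define wi where "wi = map (\<lambda>(c, b). (inv_into {1..p} d c, b)) w"
  have m: "mapw d wi = w" unfolding wi_def mapw_def map_map
  proof (rule map_idI)
    fix x assume x: "x \<in> set w"
    obtain c b where cb: "x = (c, b)" by (cases x)
    have "c \<in> d ` {1..p}" using w(2) x cb by force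
    then show "((\<lambda>(i, b). (d i, b)) \<circ> (\<lambda>(c, b). (inv_into {1..p} d c, b))) x = x"
      by (simp add: cb f_inv_into_f)
  qed
  have s: "fst ` set wi \<subseteq> {1..p}"
  proof
    fix i assume "i \<in> fst ` set wi"
    then obtain c b where "(c, b) \<in> set w" "i = inv_into {1..p} d c" by (auto simp: wi_def)
    moreover have "c \<in> d ` {1..p}" using w(2) calculation(1) by force
    ultimately show "i \<in> {1..p}" using inv_into_into[of c d "{1..p}"] by simp
  qed
  have r: "rev wi = wi" unfolding wi_def using w(3) by (metis rev_map)
  have red: "reduced wi" using reduced_mapw[of d wi] m w(1) by simp
  have l: "length wi = length w" by (simp add: wi_def)
  show ?thesis using m s r red l by blast
qed

definition omg :: "(nat \<Rightarrow> 'h gen) \<Rightarrow> nat \<Rightarrow> ('h gen \<times> bool) list" where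
  "omg Q i = [(Q i, True), (GZ i, True)]"

lemma pair_class:
  assumes "i \<in> {1..p}" "Q i \<in> gens1 H p"
  shows "el1 H p d (Q i) \<otimes>\<^bsub>G1 H p d\<^esub> el1 H p d (GZ i) = peq (gens1 H p) (rels1 H p d) `` {omg Q i}"
    "omg Q i \<in> words (gens1 H p)"
proof -
  have w: "[(Q i, True)] \<in> words (gens1 H p)" "[(GZ i, True)] \<in> words (gens1 H p)"
    using assms by (simp_all add: gens1_GZ)
  show "el1 H p d (Q i) \<otimes>\<^bsub>G1 H p d\<^esub> el1 H p d (GZ i) = peq (gens1 H p) (rels1 H p d) `` {omg Q i}"
    unfolding el1_class G1_def omg_def using pres_mult_class[OF w] by simp
  show "omg Q i \<in> words (gens1 H p)" using w by (simp add: omg_def)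
qed

lemma pair_eval:
  assumes "fst ` set wi \<subseteq> {1..p}" "\<forall>i\<in>{1..p}. Q i \<in> gens1 H p"
  shows "eval_word (G1 H p d) (mapw (\<lambda>i. el1 H p d (Q i) \<otimes>\<^bsub>G1 H p d\<^esub> el1 H p d (GZ i)) wi)
       = peq (gens1 H p) (rels1 H p d) `` {sub (omg Q) wi} \<and> sub (omg Q) wi \<in> words (gens1 H p)"
  unfolding G1_def
proof (rule ew_pres)
  show "\<forall>i\<in>fst ` set wi. el1 H p d (Q i) \<otimes>\<^bsub>pres (gens1 H p) (rels1 H p d)\<^esub> el1 H p d (GZ i) =
      peq (gens1 H p) (rels1 H p d) `` {omg Q i} \<and> omg Q i \<in> words (gens1 H p)"
    using pair_class(1)[where p=p and Q=Q and H=H and d=d] pair_class(2)[where p=p and Q=Q and H=H] assms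
    unfolding G1_def by blast
qed

lemma sub_sz_omg:
  assumes "\<forall>i. sz (Q i) = []"
  shows "sub sz (sub (omg Q) wi) = wi"
proof -
  have "(\<lambda>i. sub sz (omg Q i)) = (\<lambda>i. [(i, True)])" by (rule ext) (simp add: omg_def assms)
  then show ?thesis by (simp add: sub_sub sub_single)
qed

lemma pair_length:
  assumes wi: "fst ` set wi \<subseteq> {1..p}" "reduced wi"
    and Q: "\<forall>i\<in>{1..p}. Q i \<in> gens1 H p" "\<forall>i. sz (Q i) = []"
    and F: "F = (\<lambda>i. el1 H p d (Q i) \<otimes>\<^bsub>G1 H p d\<^esub> el1 H p d (GZ i))"
  shows "word_length (G1 H p d) (F ` {1..p}) (eval_word (G1 H p d) (mapw F wi)) = length wi"
proof (rule antisym)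
  define l where "l = map (\<lambda>(i, b). if b then F i else inv\<^bsub>G1 H p d\<^esub> (F i)) wi"
  have sl: "set l \<subseteq> F ` {1..p} \<union> m_inv (G1 H p d) ` F ` {1..p}"
    using set_signs[OF wi(1), of F "G1 H p d"] by (simp add: l_def)
  have fl: "foldr (\<otimes>\<^bsub>G1 H p d\<^esub>) l \<one>\<^bsub>G1 H p d\<^esub> = eval_word (G1 H p d) (mapw F wi)"
    unfolding l_def by (simp add: group.ew_foldr[OF group_G1])
  show "word_length (G1 H p d) (F ` {1..p}) (eval_word (G1 H p d) (mapw F wi)) \<le> length wi"
    using wl_upper[OF sl fl] by (simp add: l_def)
  have ev: "eval_word (G1 H p d) (mapw F wi) = peq (gens1 H p) (rels1 H p d) `` {sub (omg Q) wi}"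
     "sub (omg Q) wi \<in> words (gens1 H p)"
    using pair_eval[where d=d, OF wi(1) Q(1)] F by auto
  have S: "\<forall>c\<in>F ` {1..p}. \<exists>wc\<in>words (gens1 H p). c = peq (gens1 H p) (rels1 H p d) `` {wc} \<and> length (sub sz wc) \<le> 1"
  proof
    fix c assume "c \<in> F ` {1..p}"
    then obtain i where i: "i \<in> {1..p}" "c = F i" by blast
    have "c = peq (gens1 H p) (rels1 H p d) `` {omg Q i}" "omg Q i \<in> words (gens1 H p)"
      using pair_class(1)[where Q=Q and H=H and d=d, OF i(1)] pair_class(2)[where Q=Q and H=H, OF i(1)] Q(1) i F
      by auto
    moreover have "length (sub sz (omg Q i)) \<le> 1" using Q(2) by (simp add: omg_def)
    ultimately show "\<exists>wc\<in>words (gens1 H p). c = peq (gens1 H p) (rels1 H p d) `` {wc} \<and> length (sub sz wc) \<le> 1"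
      by blast
  qed
  have "length (red (sub sz (sub (omg Q) wi))) \<le> word_length (G1 H p d) (F ` {1..p}) (eval_word (G1 H p d) (mapw F wi))"
    unfolding G1_def
    by (rule wl_lower[OF sz_rels Scond[OF S] sl[unfolded G1_def] fl[unfolded G1_def] ev[unfolded G1_def]])
  then show "length wi \<le> word_length (G1 H p d) (F ` {1..p}) (eval_word (G1 H p d) (mapw F wi))"
    using sub_sz_omg[OF Q(2), of wi] reduced_red[OF wi(2)] by simp
qed




lemma a_el_fun: "a_el H p d = (\<lambda>i. el1 H p d (GX i) \<otimes>\<^bsub>G1 H p d\<^esub> el1 H p d (GZ i))"
  by (rule ext) (simp add: a_el_def)
lemma b_el_fun: "b_el H p d = (\<lambda>i. el1 H p d (GY i) \<otimes>\<^bsub>G1 H p d\<^esub> el1 H p d (GZ i))"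
  by (rule ext) (simp add: b_el_def)

lemma key_identity:
  assumes gH: "group H" and dC: "d ` {1..p} \<subseteq> carrier H"
    and wi: "fst ` set wi \<subseteq> {1..p}" "rev wi = wi"
  shows "eval_word (G1 H p d) (mapw (b_el H p d) wi) =
     eval_word (G1 H p d) (mapw (a_el H p d) wi) \<otimes>\<^bsub>G1 H p d\<^esub> el1 H p d (GH (inv\<^bsub>H\<^esub> (eval_word H (mapw d wi))))"
proof -
  let ?G = "G1 H p d"
  let ?x = "\<lambda>i. el1 H p d (GX i)" and ?y = "\<lambda>i. el1 H p d (GY i)" and ?z = "\<lambda>i. el1 H p d (GZ i)"
  let ?h = "\<lambda>a. el1 H p d (GH a)"
  have gG: "group ?G" by (rule group_G1)
  have cx: "\<forall>i\<in>fst ` set wi. ?x i \<in> carrier ?G \<and> ?y i \<in> carrier ?G \<and> ?z i \<in> carrier ?G"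
    using wi(1) by (auto intro!: el1_carrier gens1_GX gens1_GY gens1_GZ)
  define xx where "xx = eval_word ?G (mapw ?x wi)"
  define yy where "yy = eval_word ?G (mapw ?y wi)"
  define zz where "zz = eval_word ?G (mapw ?z wi)"
  have xc: "xx \<in> carrier ?G" "yy \<in> carrier ?G" "zz \<in> carrier ?G"
    unfolding xx_def yy_def zz_def using cx by (auto intro!: group.ew_closed[OF gG])
  have cXY: "\<forall>i\<in>fst ` set wi. \<forall>j\<in>fst ` set wi. ?x i \<otimes>\<^bsub>?G\<^esub> ?y j = ?y j \<otimes>\<^bsub>?G\<^esub> ?x i"
    using wi(1) comm_XY by blast
  have cXZ: "\<forall>i\<in>fst ` set wi. \<forall>j\<in>fst ` set wi. ?x i \<otimes>\<^bsub>?G\<^esub> ?z j = ?z j \<otimes>\<^bsub>?G\<^esub> ?x i"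
    using wi(1) comm_XZ by blast
  have cYZ: "\<forall>i\<in>fst ` set wi. \<forall>j\<in>fst ` set wi. ?y i \<otimes>\<^bsub>?G\<^esub> ?z j = ?z j \<otimes>\<^bsub>?G\<^esub> ?y i"
    using wi(1) comm_YZ by blast
  have cZY: "\<forall>i\<in>fst ` set wi. \<forall>j\<in>fst ` set wi. ?z i \<otimes>\<^bsub>?G\<^esub> ?y j = ?y j \<otimes>\<^bsub>?G\<^esub> ?z i"
    using cYZ by metis
  have cXiY: "\<forall>i\<in>fst ` set wi. \<forall>j\<in>fst ` set wi.
      ?x i \<otimes>\<^bsub>?G\<^esub> inv\<^bsub>?G\<^esub> ?y j = inv\<^bsub>?G\<^esub> ?y j \<otimes>\<^bsub>?G\<^esub> ?x i"
  proof (intro ballI)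
    fix i j assume i: "i \<in> fst ` set wi" and j: "j \<in> fst ` set wi"
    show "?x i \<otimes>\<^bsub>?G\<^esub> inv\<^bsub>?G\<^esub> ?y j = inv\<^bsub>?G\<^esub> ?y j \<otimes>\<^bsub>?G\<^esub> ?x i"
      using group.comm_inv[OF gG, of "?x i" "?y j"] cx cXY i j by blast
  qed
  have A: "eval_word ?G (mapw (a_el H p d) wi) = xx \<otimes>\<^bsub>?G\<^esub> zz"
    unfolding a_el_fun xx_def zz_def using cx cXZ by (intro group.ew_prod[OF gG]) auto
  have B: "eval_word ?G (mapw (b_el H p d) wi) = yy \<otimes>\<^bsub>?G\<^esub> zz"
    unfolding b_el_fun yy_def zz_def using cx cYZ by (intro group.ew_prod[OF gG]) auto
  have dC': "\<forall>i\<in>fst ` set wi. d i \<in> carrier H" using wi(1) dC by blast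
  have uC: "eval_word H (mapw d wi) \<in> carrier H" by (rule group.ew_closed[OF gH dC'])
  have "?h (eval_word H (mapw d wi)) = eval_word ?G (mapw (\<lambda>i. ?h (d i)) wi)"
    by (rule ew_hom[OF GH_hom[OF gH] gH gG dC'])
  also have "\<dots> = eval_word ?G (mapw (\<lambda>i. ?x i \<otimes>\<^bsub>?G\<^esub> inv\<^bsub>?G\<^esub> ?y i) wi)"
  proof (rule arg_cong[where f="eval_word ?G"], rule mapw_cong, intro ballI)
    fix i assume "i \<in> fst ` set wi"
    then show "?h (d i) = ?x i \<otimes>\<^bsub>?G\<^esub> inv\<^bsub>?G\<^esub> ?y i" using wi(1) dC by (intro GH_d) auto
  qed
  also have "\<dots> = xx \<otimes>\<^bsub>?G\<^esub> eval_word ?G (mapw (\<lambda>i. inv\<^bsub>?G\<^esub> ?y i) wi)"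
  proof -
    have cyi: "\<forall>i\<in>fst ` set wi. inv\<^bsub>?G\<^esub> ?y i \<in> carrier ?G" using cx group.inv_closed[OF gG] by blast
    show ?thesis unfolding xx_def using cx cyi cXiY by (intro group.ew_prod[OF gG]) auto
  qed
  also have "eval_word ?G (mapw (\<lambda>i. inv\<^bsub>?G\<^esub> ?y i) wi) = inv\<^bsub>?G\<^esub> yy"
    unfolding yy_def using group.ew_inv_rev[OF gG, of wi ?y] cx wi(2) by auto
  finally have hu: "?h (eval_word H (mapw d wi)) = xx \<otimes>\<^bsub>?G\<^esub> inv\<^bsub>?G\<^esub> yy" .
  have "?h (inv\<^bsub>H\<^esub> (eval_word H (mapw d wi))) = inv\<^bsub>?G\<^esub> ?h (eval_word H (mapw d wi))"
    using group_hom.hom_inv[of H ?G ?h] GH_hom[OF gH] gH gG uC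
    by (simp add: group_hom_def group_hom_axioms_def)
  also have "\<dots> = inv\<^bsub>?G\<^esub> (xx \<otimes>\<^bsub>?G\<^esub> inv\<^bsub>?G\<^esub> yy)" by (simp only: hu)
  finally have hi: "?h (inv\<^bsub>H\<^esub> (eval_word H (mapw d wi))) = inv\<^bsub>?G\<^esub> (xx \<otimes>\<^bsub>?G\<^esub> inv\<^bsub>?G\<^esub> yy)" .
  have c1: "xx \<otimes>\<^bsub>?G\<^esub> yy = yy \<otimes>\<^bsub>?G\<^esub> xx"
    unfolding xx_def yy_def using cx cXY by (intro group.comm_ew2[OF gG]) auto
  have c2: "xx \<otimes>\<^bsub>?G\<^esub> zz = zz \<otimes>\<^bsub>?G\<^esub> xx"
    unfolding xx_def zz_def using cx cXZ by (intro group.comm_ew2[OF gG]) auto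
  have c3: "zz \<otimes>\<^bsub>?G\<^esub> yy = yy \<otimes>\<^bsub>?G\<^esub> zz"
    unfolding yy_def zz_def using cx cZY by (intro group.comm_ew2[OF gG]) auto
  show ?thesis unfolding A B hi by (rule group.key_calc[OF gG xc c1 c2 c3, symmetric])
qed




lemma S1_cond:
  assumes "T \<subseteq> carrier H"
  shows "\<forall>c\<in>S1 H p d T. \<exists>wc\<in>words (gens1 H p). c = peq (gens1 H p) (rels1 H p d) `` {wc} \<and> length (sub sz wc) \<le> 1"
proof
  fix c assume c: "c \<in> S1 H p d T"
  have gen: "\<And>x. x \<in> gens1 H p \<Longrightarrow> \<exists>wc\<in>words (gens1 H p). el1 H p d x = peq (gens1 H p) (rels1 H p d) `` {wc} \<and> length (sub sz wc) \<le> 1"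
  proof -
    fix x assume x: "x \<in> gens1 H p"
    have "[(x, True)] \<in> words (gens1 H p)" using x by simp
    moreover have "length (sub sz [(x, True)]) \<le> 1" using length_sz[of x] by simp
    ultimately show "\<exists>wc\<in>words (gens1 H p). el1 H p d x = peq (gens1 H p) (rels1 H p d) `` {wc} \<and> length (sub sz wc) \<le> 1"
      unfolding el1_class by blast
  qed
  have pair: "\<And>Q i. i \<in> {1..p} \<Longrightarrow> Q i \<in> gens1 H p \<Longrightarrow> sz (Q i) = [] \<Longrightarrow>
     \<exists>wc\<in>words (gens1 H p). el1 H p d (Q i) \<otimes>\<^bsub>G1 H p d\<^esub> el1 H p d (GZ i) = peq (gens1 H p) (rels1 H p d) `` {wc} \<and> length (sub sz wc) \<le> 1"
  proof -
    fix Q :: "nat \<Rightarrow> 'a gen" and i assume i: "i \<in> {1..p}" "Q i \<in> gens1 H p" "sz (Q i) = []"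
    have "length (sub sz (omg Q i)) \<le> 1" using i(3) by (simp add: omg_def)
    then show "\<exists>wc\<in>words (gens1 H p). el1 H p d (Q i) \<otimes>\<^bsub>G1 H p d\<^esub> el1 H p d (GZ i) = peq (gens1 H p) (rels1 H p d) `` {wc} \<and> length (sub sz wc) \<le> 1"
      using pair_class(1)[where Q=Q and H=H and d=d, OF i(1,2)] pair_class(2)[where Q=Q and H=H, OF i(1,2)] by blast
  qed
  from c consider (T) t where "t \<in> T" "c = el1 H p d (GH t)"
    | (X) i where "i \<in> {1..p}" "c = el1 H p d (GX i)"
    | (Y) i where "i \<in> {1..p}" "c = el1 H p d (GY i)"
    | (Z) i where "i \<in> {1..p}" "c = el1 H p d (GZ i)"
    | (A) i where "i \<in> {1..p}" "c = a_el H p d i"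
    | (B) i where "i \<in> {1..p}" "c = b_el H p d i"
    | (S) "c = el1 H p d GS1"
    unfolding S1_def by blast
  then show "\<exists>wc\<in>words (gens1 H p). c = peq (gens1 H p) (rels1 H p d) `` {wc} \<and> length (sub sz wc) \<le> 1"
  proof cases
    case T then show ?thesis using gen[of "GH t"] assms by (auto simp: gens1_GH)
  next
    case X then show ?thesis using gen[of "GX i"] by (simp add: gens1_GX)
  next
    case Y then show ?thesis using gen[of "GY i"] by (simp add: gens1_GY)
  next
    case Z then show ?thesis using gen[of "GZ i"] by (simp add: gens1_GZ)
  next
    case A then show ?thesis using pair[of i GX] by (simp add: gens1_GX a_el_def)
  next
    case B then show ?thesis using pair[of i GY] by (simp add: gens1_GY b_el_def)
  next
    case S then show ?thesis using gen[of GS1] by (simp add: gens1_GS1)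
  qed
qed

lemma pre_Suc:
  assumes "monoid H" "set ts \<subseteq> carrier H" "k < length ts"
  shows "foldr (\<otimes>\<^bsub>H\<^esub>) (take (Suc k) ts) \<one>\<^bsub>H\<^esub> = foldr (\<otimes>\<^bsub>H\<^esub>) (take k ts) \<one>\<^bsub>H\<^esub> \<otimes>\<^bsub>H\<^esub> ts ! k"
proof -
  have tk: "take (Suc k) ts = take k ts @ [ts ! k]" using assms(3) by (rule take_Suc_conv_app_nth)
  have s: "set (take k ts) \<subseteq> carrier H" "set [ts ! k] \<subseteq> carrier H"
    using assms(2,3) by (auto dest: in_set_takeD)
  have "foldr (\<otimes>\<^bsub>H\<^esub>) (take (Suc k) ts) \<one>\<^bsub>H\<^esub> = foldr (\<otimes>\<^bsub>H\<^esub>) (take k ts) \<one>\<^bsub>H\<^esub> \<otimes>\<^bsub>H\<^esub> foldr (\<otimes>\<^bsub>H\<^esub>) [ts ! k] \<one>\<^bsub>H\<^esub>"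
    unfolding tk by (rule monoid.foldr_append_prod[OF assms(1) s])
  then show ?thesis using s(2) assms(1) by (simp add: monoid.r_one)
qed

lemma path_lemma:
  assumes gH: "group H" and TC: "T \<subseteq> carrier H"
    and ts: "set ts \<subseteq> T \<union> m_inv H ` T"
    and g0C: "g0 \<in> carrier (G1 H p d)"
    and \<gamma>: "\<gamma> = map (\<lambda>k. g0 \<otimes>\<^bsub>G1 H p d\<^esub> el1 H p d (GH (foldr (\<otimes>\<^bsub>H\<^esub>) (take k ts) \<one>\<^bsub>H\<^esub>))) [0..<Suc (length ts)]"
  shows "cayley_path (G1 H p d) (S1 H p d T) \<gamma> g0 (g0 \<otimes>\<^bsub>G1 H p d\<^esub> el1 H p d (GH (foldr (\<otimes>\<^bsub>H\<^esub>) ts \<one>\<^bsub>H\<^esub>)))"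
proof -
  let ?G = "G1 H p d"
  let ?h = "\<lambda>a. el1 H p d (GH a)"
  let ?pre = "\<lambda>k. foldr (\<otimes>\<^bsub>H\<^esub>) (take k ts) \<one>\<^bsub>H\<^esub>"
  have gG: "group ?G" by (rule group_G1)
  have hom: "?h \<in> hom H ?G" by (rule GH_hom[OF gH])
  have tsC: "set ts \<subseteq> carrier H" using ts TC group.inv_closed[OF gH] by blast
  have preC: "\<And>k. ?pre k \<in> carrier H"
    using tsC by (intro foldr_closed[OF group.is_monoid[OF gH]]) (auto dest: in_set_takeD)
  have hC: "\<And>a. a \<in> carrier H \<Longrightarrow> ?h a \<in> carrier ?G" by (intro el1_carrier gens1_GH)
  have nth: "\<And>k. k < Suc (length ts) \<Longrightarrow> \<gamma> ! k = g0 \<otimes>\<^bsub>?G\<^esub> ?h (?pre k)"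
    unfolding \<gamma> by (simp del: upt_Suc)
  have len: "length \<gamma> = Suc (length ts)" unfolding \<gamma> by simp
  have ne: "\<gamma> \<noteq> []" using len by auto
  have "hd \<gamma> = \<gamma> ! 0" using ne by (simp add: hd_conv_nth)
  also have "\<dots> = g0 \<otimes>\<^bsub>?G\<^esub> ?h \<one>\<^bsub>H\<^esub>" using nth[of 0] by simp
  also have "\<dots> = g0" using hom_one[OF hom gH gG] monoid.r_one[OF group.is_monoid[OF gG] g0C] by simp
  finally have hd: "hd \<gamma> = g0" .
  have "last \<gamma> = \<gamma> ! length ts" using ne len by (simp add: last_conv_nth)
  also have "\<dots> = g0 \<otimes>\<^bsub>?G\<^esub> ?h (foldr (\<otimes>\<^bsub>H\<^esub>) ts \<one>\<^bsub>H\<^esub>)" using nth[of "length ts"] by simp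
  finally have last: "last \<gamma> = g0 \<otimes>\<^bsub>?G\<^esub> ?h (foldr (\<otimes>\<^bsub>H\<^esub>) ts \<one>\<^bsub>H\<^esub>)" .
  have setC: "set \<gamma> \<subseteq> carrier ?G"
  proof
    fix v assume "v \<in> set \<gamma>"
    then obtain k where "k < Suc (length ts)" "v = \<gamma> ! k" using len by (metis in_set_conv_nth)
    then show "v \<in> carrier ?G" using nth g0C hC[OF preC] group.is_monoid[OF gG] monoid.m_closed by metis
  qed
  have steps: "\<forall>k. Suc k < length \<gamma> \<longrightarrow>
      (\<exists>s\<in>S1 H p d T. \<gamma> ! Suc k = \<gamma> ! k \<otimes>\<^bsub>?G\<^esub> s \<or> \<gamma> ! k = \<gamma> ! Suc k \<otimes>\<^bsub>?G\<^esub> s)"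
  proof (intro allI impI)
    fix k assume k: "Suc k < length \<gamma>"
    then have kl: "k < length ts" using len by simp
    have tk: "ts ! k \<in> T \<union> m_inv H ` T" using ts kl nth_mem by blast
    have tkC: "ts ! k \<in> carrier H" using tsC kl nth_mem by blast
    have "?pre (Suc k) = ?pre k \<otimes>\<^bsub>H\<^esub> ts ! k" by (rule pre_Suc[OF group.is_monoid[OF gH] tsC kl])
    then have "?h (?pre (Suc k)) = ?h (?pre k) \<otimes>\<^bsub>?G\<^esub> ?h (ts ! k)"
      using hom_mult[OF hom preC tkC] by simp
    then have step: "\<gamma> ! Suc k = \<gamma> ! k \<otimes>\<^bsub>?G\<^esub> ?h (ts ! k)"
      using nth[of k] nth[of "Suc k"] kl g0C hC[OF preC] hC[OF tkC] by (simp add: monoid.m_assoc[OF group.is_monoid[OF gG]])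
    show "\<exists>s\<in>S1 H p d T. \<gamma> ! Suc k = \<gamma> ! k \<otimes>\<^bsub>?G\<^esub> s \<or> \<gamma> ! k = \<gamma> ! Suc k \<otimes>\<^bsub>?G\<^esub> s"
    proof (cases "ts ! k \<in> T")
      case True
      then have "?h (ts ! k) \<in> S1 H p d T" by (simp add: S1_def)
      then show ?thesis using step by blast
    next
      case False
      then obtain t where t: "t \<in> T" "ts ! k = inv\<^bsub>H\<^esub> t" using tk by blast
      have tC: "t \<in> carrier H" using t TC by blast
      have hinv: "?h (ts ! k) = inv\<^bsub>?G\<^esub> ?h t"
        using group_hom.hom_inv[of H ?G ?h t] hom gH gG tC t(2)
        by (simp add: group_hom_def group_hom_axioms_def)
      have gkC: "\<gamma> ! k \<in> carrier ?G" using setC k by (metis Suc_lessD nth_mem subsetD)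
      have "\<gamma> ! Suc k \<otimes>\<^bsub>?G\<^esub> ?h t = \<gamma> ! k"
        using step hinv gkC hC[OF tC] group.l_inv[OF gG hC[OF tC]] group.inv_closed[OF gG hC[OF tC]]
        by (simp add: monoid.m_assoc[OF group.is_monoid[OF gG]] monoid.r_one[OF group.is_monoid[OF gG]])
      moreover have "?h t \<in> S1 H p d T" using t(1) by (simp add: S1_def)
      ultimately show ?thesis by metis
    qed
  qed
  show ?thesis unfolding cayley_path_def using ne hd last setC steps by blast
qed




lemma vertex_bound:
  assumes gH: "group H" and TC: "T \<subseteq> carrier H"
    and wi: "fst ` set wi \<subseteq> {1..p}" "reduced wi"
    and ts: "set ts \<subseteq> T \<union> m_inv H ` T"
  shows "length wi \<le> word_length (G1 H p d) (S1 H p d T)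
     (eval_word (G1 H p d) (mapw (a_el H p d) wi) \<otimes>\<^bsub>G1 H p d\<^esub> el1 H p d (GH (foldr (\<otimes>\<^bsub>H\<^esub>) (take k ts) \<one>\<^bsub>H\<^esub>)))"
proof -
  let ?G = "G1 H p d"
  let ?h = "\<lambda>a. el1 H p d (GH a)"
  let ?P = "peq (gens1 H p) (rels1 H p d)"
  let ?S = "S1 H p d T"
  define g0 where "g0 = eval_word ?G (mapw (a_el H p d) wi)"
  define hh where "hh = foldr (\<otimes>\<^bsub>H\<^esub>) (take k ts) \<one>\<^bsub>H\<^esub>"
  have gG: "group ?G" by (rule group_G1)
  have hom: "?h \<in> hom H ?G" by (rule GH_hom[OF gH])
  have tsC: "set ts \<subseteq> carrier H" using ts TC group.inv_closed[OF gH] by blast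
  have tkC: "set (take k ts) \<subseteq> carrier H" using tsC by (auto dest: in_set_takeD)
  have hhC: "hh \<in> carrier H" unfolding hh_def by (rule foldr_closed[OF group.is_monoid[OF gH] tkC])
  have QX: "\<forall>i\<in>{1..p}. GX i \<in> gens1 H p" by (simp add: gens1_GX)
  have ev: "g0 = ?P `` {sub (omg GX) wi}" "sub (omg GX) wi \<in> words (gens1 H p)"
    using pair_eval[where d=d, OF wi(1) QX] unfolding g0_def a_el_fun by auto
  have wh: "[(GH hh, True)] \<in> words (gens1 H p)" using hhC by (simp add: gens1_GH)
  have vcls: "g0 \<otimes>\<^bsub>?G\<^esub> ?h hh = ?P `` {sub (omg GX) wi @ [(GH hh, True)]}"
    unfolding ev(1) el1_class G1_def by (rule pres_mult_class[OF ev(2) wh])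
  have wv: "sub (omg GX) wi @ [(GH hh, True)] \<in> words (gens1 H p)"
    unfolding words_append using ev(2) wh by (rule conjI)
  define la where "la = map (\<lambda>(i, b). if b then a_el H p d i else inv\<^bsub>?G\<^esub> (a_el H p d i)) wi"
  define lb where "lb = map ?h (take k ts)"
  have aS: "a_el H p d ` {1..p} \<subseteq> ?S" by (auto simp: S1_def)
  have sla: "set la \<subseteq> ?S \<union> m_inv ?G ` ?S"
    using set_signs[OF wi(1), of "a_el H p d" ?G] aS unfolding la_def by blast
  have slb: "set lb \<subseteq> ?S \<union> m_inv ?G ` ?S"
  proof
    fix y assume "y \<in> set lb"
    then obtain t where t: "t \<in> set (take k ts)" "y = ?h t" by (auto simp: lb_def)
    have "t \<in> T \<union> m_inv H ` T" using t(1) ts by (auto dest: in_set_takeD)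
    then show "y \<in> ?S \<union> m_inv ?G ` ?S"
    proof
      assume "t \<in> T" then show ?thesis using t(2) by (simp add: S1_def)
    next
      assume "t \<in> m_inv H ` T"
      then obtain t' where t': "t' \<in> T" "t = inv\<^bsub>H\<^esub> t'" by blast
      have "?h t = inv\<^bsub>?G\<^esub> ?h t'"
        using group_hom.hom_inv[of H ?G ?h t'] hom gH gG t' TC
        by (auto simp: group_hom_def group_hom_axioms_def)
      moreover have "?h t' \<in> ?S" using t'(1) by (simp add: S1_def)
      ultimately show ?thesis using t(2) by blast
    qed
  qed
  have SC: "?S \<subseteq> carrier ?G"
  proof
    fix c assume "c \<in> ?S"
    then obtain wc where "wc \<in> words (gens1 H p)" "c = ?P `` {wc}" using S1_cond[OF TC] by blast
    then show "c \<in> carrier ?G" unfolding G1_def by (simp add: class_in_carrier)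
  qed
  have SIC: "?S \<union> m_inv ?G ` ?S \<subseteq> carrier ?G" using SC group.inv_closed[OF gG] by blast
  have laC: "set la \<subseteq> carrier ?G" using sla SIC by (rule subset_trans)
  have lbC: "set lb \<subseteq> carrier ?G" using slb SIC by (rule subset_trans)
  have fla: "foldr (\<otimes>\<^bsub>?G\<^esub>) la \<one>\<^bsub>?G\<^esub> = g0"
    unfolding la_def g0_def by (simp add: group.ew_foldr[OF gG])
  have flb: "foldr (\<otimes>\<^bsub>?G\<^esub>) lb \<one>\<^bsub>?G\<^esub> = ?h hh"
    unfolding lb_def hh_def using group.hom_foldr[OF gH hom gG tkC] by simp
  have fl: "foldr (\<otimes>\<^bsub>?G\<^esub>) (la @ lb) \<one>\<^bsub>?G\<^esub> = g0 \<otimes>\<^bsub>?G\<^esub> ?h hh"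
    using monoid.foldr_append_prod[OF group.is_monoid[OF gG] laC lbC] fla flb by simp
  have sl: "set (la @ lb) \<subseteq> ?S \<union> m_inv ?G ` ?S" using sla slb by simp
  have "length (red (sub sz (sub (omg GX) wi @ [(GH hh, True)]))) \<le> word_length ?G ?S (g0 \<otimes>\<^bsub>?G\<^esub> ?h hh)"
    unfolding G1_def
    by (rule wl_lower[OF sz_rels Scond[OF S1_cond[OF TC]] sl[unfolded G1_def] fl[unfolded G1_def]
          vcls[unfolded G1_def] wv])
  moreover have "sub sz (sub (omg GX) wi @ [(GH hh, True)]) = wi"
    using sub_sz_omg[of GX wi] by simp
  ultimately show ?thesis using reduced_red[OF wi(2)] unfolding g0_def hh_def by simp
qed

theorem lemma3p8:
  fixes H :: "('h, 'b) monoid_scheme" and T :: "'h set" and p :: nat and d :: "nat \<Rightarrow> 'h"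
    and \<Delta> f :: "real \<Rightarrow> real" and D r0 :: real and r :: nat
  assumes H_fp: "finitely_presented H"
    and T_fin: "finite T" and T_sub: "T \<subseteq> carrier H" and T_gen: "generate H T = carrier H"
    and R_sub: "d ` {1..p} \<subseteq> T" and d_inj: "inj_on d {1..p}"
    and R_free: "free_basis H (d ` {1..p})"
    and \<Delta>_mono: "mono_on {0..} \<Delta>" and \<Delta>_bij: "bij_betw \<Delta> {0..} {0..}"
    and \<Delta>_equiv: "lip_equiv \<Delta> (dist_fn H (d ` {1..p}) T)"
    and \<Delta>_ge: "\<forall>x\<ge>1. \<Delta> x \<ge> x"
    and f_inv: "\<forall>x\<ge>0. f x \<ge> 0 \<and> \<Delta> (f x) = x \<and> f (\<Delta> x) = x"
    and f_le: "\<forall>g\<in>generate H (d ` {1..p}).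
                 f (real (word_length H (d ` {1..p}) g)) \<le> real (word_length H T g)"
    and D_gt: "D > 1" and r0_ge: "r0 \<ge> 1"
    and cert: "\<forall>x\<ge>r0. \<exists>u\<in>generate H (d ` {1..p}). palindromic H (d ` {1..p}) u \<and>
                 x / D \<le> real (word_length H (d ` {1..p}) u) \<and>
                 real (word_length H (d ` {1..p}) u) \<le> x \<and>
                 real (word_length H T u) \<le> D * f x"
    and r_ge: "real r \<ge> r0"
  shows "\<exists>g0 g1.
     g0 \<in> generate (G1 H p d) (a_el H p d ` {1..p}) \<and>
     g1 \<in> generate (G1 H p d) (b_el H p d ` {1..p}) \<and>
     inv\<^bsub>G2 H p d\<^esub> (s2_el H p d) \<otimes>\<^bsub>G2 H p d\<^esub> to_G2 H p d g0 \<otimes>\<^bsub>G2 H p d\<^esub> s2_el H p d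
       = to_G2 H p d g1 \<and>
     real r / D \<le> real (word_length (G1 H p d) (a_el H p d ` {1..p}) g0) \<and>
     real (word_length (G1 H p d) (a_el H p d ` {1..p}) g0) \<le> real r \<and>
     real r / D \<le> real (word_length (G1 H p d) (b_el H p d ` {1..p}) g1) \<and>
     real (word_length (G1 H p d) (b_el H p d ` {1..p}) g1) \<le> real r \<and>
     (\<exists>\<gamma>. cayley_path (G1 H p d) (S1 H p d T) \<gamma> g0 g1 \<and>
        real (length \<gamma> - 1) \<le> D * f (real r) \<and>
        (\<forall>v\<in>set \<gamma>. \<exists>h\<in>carrier H. v = g0 \<otimes>\<^bsub>G1 H p d\<^esub> el1 H p d (GH h)) \<and>
        (\<forall>v\<in>set \<gamma>. real (word_length (G1 H p d) (S1 H p d T) v) \<ge> real r / D))"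
proof -
  have gH: "group H" using H_fp by (simp add: finitely_presented_def)
  let ?R = "d ` {1..p}"
  let ?G = "G1 H p d"
  let ?G2 = "G2 H p d"
  let ?h = "\<lambda>a. el1 H p d (GH a)"
  have gG: "group ?G" by (rule group_G1)
  have gG2: "group ?G2" by (rule group_G2)
  have RC: "?R \<subseteq> carrier H" using R_sub T_sub by blast
  obtain u where u: "u \<in> generate H ?R" "palindromic H ?R u"
      "real r / D \<le> real (word_length H ?R u)" "real (word_length H ?R u) \<le> real r"
      "real (word_length H T u) \<le> D * f (real r)"
    using cert[rule_format, OF r_ge] by blast
  obtain w where w: "reduced w" "fst ` set w \<subseteq> ?R" "eval_word H w = u" "rev w = w"
      "length w = word_length H ?R u"
    using word_from_cert[OF gH RC R_free u(2)] by blast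
  obtain wi where wi: "mapw d wi = w" "fst ` set wi \<subseteq> {1..p}" "rev wi = wi" "reduced wi" "length wi = length w"
    using index_word[OF w(1,2,4)] by blast
  have uw: "u = eval_word H (mapw d wi)" using w(3) wi(1) by simp
  define g0 where "g0 = eval_word ?G (mapw (a_el H p d) wi)"
  define g1 where "g1 = eval_word ?G (mapw (b_el H p d) wi)"
  have aC: "a_el H p d ` {1..p} \<subseteq> carrier ?G"
    unfolding a_el_def
    by (auto intro!: monoid.m_closed[OF group.is_monoid[OF gG]] el1_carrier gens1_GX gens1_GZ)
  have bC: "b_el H p d ` {1..p} \<subseteq> carrier ?G"
    unfolding b_el_def
    by (auto intro!: monoid.m_closed[OF group.is_monoid[OF gG]] el1_carrier gens1_GY gens1_GZ)
  have aW: "\<forall>i\<in>fst ` set wi. a_el H p d i \<in> a_el H p d ` {1..p}" using wi(2) by blast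
  have bW: "\<forall>i\<in>fst ` set wi. b_el H p d i \<in> b_el H p d ` {1..p}" using wi(2) by blast
  have aW': "\<forall>i\<in>fst ` set wi. a_el H p d i \<in> carrier ?G" using aW aC by blast
  have bW': "\<forall>i\<in>fst ` set wi. b_el H p d i \<in> carrier ?G" using bW bC by blast
  have gen0: "g0 \<in> generate ?G (a_el H p d ` {1..p})"
    unfolding g0_def by (rule group.ew_gen[OF gG aC aW])
  have gen1: "g1 \<in> generate ?G (b_el H p d ` {1..p})"
    unfolding g1_def by (rule group.ew_gen[OF gG bC bW])
  have g0C: "g0 \<in> carrier ?G" unfolding g0_def by (rule group.ew_closed[OF gG aW'])
  have t0: "to_G2 H p d g0 = eval_word ?G2 (mapw (\<lambda>i. to_G2 H p d (a_el H p d i)) wi)"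
    unfolding g0_def by (rule ew_hom[OF to_G2_hom gG gG2 aW'])
  have t1: "to_G2 H p d g1 = eval_word ?G2 (mapw (\<lambda>i. to_G2 H p d (b_el H p d i)) wi)"
    unfolding g1_def by (rule ew_hom[OF to_G2_hom gG gG2 bW'])
  have sC: "s2_el H p d \<in> carrier ?G2"
    unfolding s2_el_def G2_def by (rule gen_el_carrier) (simp add: gens2_def)
  have cj: "\<forall>i\<in>fst ` set wi. to_G2 H p d (a_el H p d i) \<in> carrier ?G2 \<and>
      inv\<^bsub>?G2\<^esub> s2_el H p d \<otimes>\<^bsub>?G2\<^esub> to_G2 H p d (a_el H p d i) \<otimes>\<^bsub>?G2\<^esub> s2_el H p d = to_G2 H p d (b_el H p d i)"
  proof
    fix i assume i: "i \<in> fst ` set wi"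
    then have "i \<in> {1..p}" using wi(2) by blast
    then show "to_G2 H p d (a_el H p d i) \<in> carrier ?G2 \<and>
      inv\<^bsub>?G2\<^esub> s2_el H p d \<otimes>\<^bsub>?G2\<^esub> to_G2 H p d (a_el H p d i) \<otimes>\<^bsub>?G2\<^esub> s2_el H p d = to_G2 H p d (b_el H p d i)"
      using conj_G2[of i p H d] hom_in_carrier[OF to_G2_hom] aW' i by blast
  qed
  have conj: "inv\<^bsub>?G2\<^esub> s2_el H p d \<otimes>\<^bsub>?G2\<^esub> to_G2 H p d g0 \<otimes>\<^bsub>?G2\<^esub> s2_el H p d = to_G2 H p d g1"
    unfolding t0 t1 by (rule group.ew_conj[OF gG2 sC cj])
  have QX: "\<forall>i\<in>{1..p}. GX i \<in> gens1 H p" by (simp add: gens1_GX)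
  have QY: "\<forall>i\<in>{1..p}. GY i \<in> gens1 H p" by (simp add: gens1_GY)
  have sX: "\<forall>i. sz (GX i) = []" by simp
  have sY: "\<forall>i. sz (GY i) = []" by simp
  have la: "word_length ?G (a_el H p d ` {1..p}) g0 = length wi"
    unfolding g0_def by (rule pair_length[OF wi(2,4) QX sX a_el_fun])
  have lb: "word_length ?G (b_el H p d ` {1..p}) g1 = length wi"
    unfolding g1_def by (rule pair_length[OF wi(2,4) QY sY b_el_fun])
  have lw: "length wi = word_length H ?R u" using wi(5) w(5) by simp
  have uC: "u \<in> carrier H" by (rule group.generate_in_carrier[OF gH RC u(1)])
  have uT: "u \<in> generate H T" using T_gen uC by simp
  obtain l0 where l0: "set l0 \<subseteq> T \<union> m_inv H ` T" "foldr (\<otimes>\<^bsub>H\<^esub>) l0 \<one>\<^bsub>H\<^esub> = u"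
    using group.gen_list[OF gH T_sub uT] by blast
  obtain lt where lt: "length lt = word_length H T u" "set lt \<subseteq> T \<union> m_inv H ` T"
      "foldr (\<otimes>\<^bsub>H\<^esub>) lt \<one>\<^bsub>H\<^esub> = u"
    using wl_witness[OF l0] by blast
  have TIC: "T \<union> m_inv H ` T \<subseteq> carrier H" using T_sub group.inv_closed[OF gH] by blast
  have ltC: "set lt \<subseteq> carrier H" using lt(2) TIC by (rule subset_trans)
  define ts where "ts = rev (map (m_inv H) lt)"
  have ts: "set ts \<subseteq> T \<union> m_inv H ` T"
  proof
    fix y assume "y \<in> set ts"
    then obtain x where x: "x \<in> set lt" "y = inv\<^bsub>H\<^esub> x" by (auto simp: ts_def)
    then have "x \<in> T \<union> m_inv H ` T" using lt(2) by blast
    then show "y \<in> T \<union> m_inv H ` T"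
    proof
      assume "x \<in> T" then show ?thesis using x(2) by blast
    next
      assume "x \<in> m_inv H ` T"
      then obtain t where "t \<in> T" "x = inv\<^bsub>H\<^esub> t" by blast
      then show ?thesis using x(2) T_sub group.inv_inv[OF gH] by auto
    qed
  qed
  have fts: "foldr (\<otimes>\<^bsub>H\<^esub>) ts \<one>\<^bsub>H\<^esub> = inv\<^bsub>H\<^esub> u"
    unfolding ts_def using group.foldr_rev_inv[OF gH ltC] lt(3) by simp
  have lts: "length ts = word_length H T u" using lt(1) by (simp add: ts_def)
  define \<gamma> where "\<gamma> = map (\<lambda>k. g0 \<otimes>\<^bsub>?G\<^esub> ?h (foldr (\<otimes>\<^bsub>H\<^esub>) (take k ts) \<one>\<^bsub>H\<^esub>)) [0..<Suc (length ts)]"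
  have cp: "cayley_path ?G (S1 H p d T) \<gamma> g0 (g0 \<otimes>\<^bsub>?G\<^esub> ?h (foldr (\<otimes>\<^bsub>H\<^esub>) ts \<one>\<^bsub>H\<^esub>))"
    by (rule path_lemma[OF gH T_sub ts g0C \<gamma>_def])
  have key: "g1 = g0 \<otimes>\<^bsub>?G\<^esub> ?h (inv\<^bsub>H\<^esub> u)"
    unfolding g0_def g1_def uw by (rule key_identity[OF gH RC wi(2,3)])
  have cp': "cayley_path ?G (S1 H p d T) \<gamma> g0 g1" using cp fts key by simp
  have lg: "real (length \<gamma> - 1) \<le> D * f (real r)" using lts u(5) by (simp add: \<gamma>_def)
  have preC: "\<And>k. foldr (\<otimes>\<^bsub>H\<^esub>) (take k ts) \<one>\<^bsub>H\<^esub> \<in> carrier H"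
  proof -
    fix k
    have "set (take k ts) \<subseteq> carrier H" using ts TIC by (auto dest: in_set_takeD)
    then show "foldr (\<otimes>\<^bsub>H\<^esub>) (take k ts) \<one>\<^bsub>H\<^esub> \<in> carrier H"
      by (rule foldr_closed[OF group.is_monoid[OF gH]])
  qed
  have vert: "\<forall>v\<in>set \<gamma>. \<exists>h\<in>carrier H. v = g0 \<otimes>\<^bsub>?G\<^esub> ?h h"
  proof
    fix v assume "v \<in> set \<gamma>"
    then obtain k where k: "v = g0 \<otimes>\<^bsub>?G\<^esub> ?h (foldr (\<otimes>\<^bsub>H\<^esub>) (take k ts) \<one>\<^bsub>H\<^esub>)"
      unfolding \<gamma>_def set_map by (auto simp del: upt_Suc)
    then show "\<exists>h\<in>carrier H. v = g0 \<otimes>\<^bsub>?G\<^esub> ?h h" using preC[of k] by blast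
  qed
  have vlen: "\<forall>v\<in>set \<gamma>. real (word_length ?G (S1 H p d T) v) \<ge> real r / D"
  proof
    fix v assume "v \<in> set \<gamma>"
    then obtain k where k: "v = g0 \<otimes>\<^bsub>?G\<^esub> ?h (foldr (\<otimes>\<^bsub>H\<^esub>) (take k ts) \<one>\<^bsub>H\<^esub>)"
      unfolding \<gamma>_def set_map by (auto simp del: upt_Suc)
    have "length wi \<le> word_length ?G (S1 H p d T) v"
      unfolding k g0_def by (rule vertex_bound[OF gH T_sub wi(2,4) ts])
    then show "real (word_length ?G (S1 H p d T) v) \<ge> real r / D" using u(3) lw by linarith
  qed
  show ?thesis
    using gen0 gen1 conj la lb lw u(3,4) cp' lg vert vlen by (intro exI[of _ g0] exI[of _ g1]) auto
qed



end
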